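(* Let $M$ be a connected matroid. The following are equivalent. (i) $M$ has the symmetric strong circuit elimination property (SSCE); (ii) $M$ has no pair of skew circuits; (iii) for all integers $k\ge 3$ and $l\ge 3$, $M$ has no series minor isomorphic to the series connection $S(U_{k-2,k},U_{l-2,l})$; (iv) $M^*$ is unbreakable.
   Context: A matroid $M$ has the symmetric strong circuit elimination property (SSCE) if, whenever $C_1$ and $C_2$ are circuits of $M$ and $e_1,e_2,e$ are elements with $e_1\in C_1-C_2$, $e_2\in C_2-C_1$ and $e\in C_1\cap C_2$, there is a circuit $C_3$ of $M$ with $\{e_1,e_2\}\subseteq C_3\subseteq (C_1\cup C_2)-e$. Two sets $X,Y$ in a matroid with rank function $r$ are skew if $r(X)+r(Y)=r(X\cup Y)$; a pair of skew circuits is a pair of distinct circuits that are skew. $U_{r,n}$ denotes the uniform matroid of rank $r$ on $n$ elements. Series connection: if $M_1,M_2$ are matroids with $E(M_1)\cap E(M_2)=\{p\}$ and $p$ is neither a loop nor a coloop of either, then $S((M_1;p),(M_2;p))$ (also written $S(M_1,M_2)$) is the matroid on $E(M_1)\cup E(M_2)$ whose circuits are the circuits of $M_1$ avoiding $p$, the circuits of $M_2$ avoiding $p$, and all sets $C_1\cup C_2$ where $C_i$ is a circuit of $M_i$ containing $p$ for $i=1,2$. (For uniform $M_1,M_2$ the choice of basepoint does not matter up to isomorphism.) A series contraction of $M$ is the contraction $M/f$ of an element $f$ for which there is $g$ with $\{f,g\}$ a cocircuit of $M$; a matroid $N$ is a series minor of $M$ if $N$ can be obtained from $M$ by a sequence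 of deletions and series contractions. A matroid $M$ is unbreakable if $M$ is connected and $M/F$ is connected for every flat $F$ of $M$. *)

theory Defs
  imports Main
begin

datatype 'a matroid = Matroid (gnd: "'a set") (indeps: "'a set set")

definition wf_matroid :: "'a matroid \<Rightarrow> bool" where
  "wf_matroid M \<longleftrightarrow>
     finite (gnd M) \<and> indeps M \<subseteq> Pow (gnd M) \<and> {} \<in> indeps M \<and>
     (\<forall>X Y. X \<in> indeps M \<and> Y \<subseteq> X \<longrightarrow> Y \<in> indeps M) \<and>
     (\<forall>X Y. X \<in> indeps M \<and> Y \<in> indeps M \<and> card X < card Y \<longrightarrow>
        (\<exists>e \<in> Y - X. insert e X \<in> indeps M))"

definition circuit :: "'a matroid \<Rightarrow> 'a set \<Rightarrow> bool" where
  "circuit M C \<longleftrightarrow> C \<subseteq> gnd M \<and> C \<notin> indeps M \<and> (\<forall>D. D \<subset> C \<longrightarrow> D \<in> indeps M)"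

definition rank :: "'a matroid \<Rightarrow> 'a set \<Rightarrow> nat" where
  "rank M X = Max (card ` {Y. Y \<subseteq> X \<and> Y \<in> indeps M})"

definition skew :: "'a matroid \<Rightarrow> 'a set \<Rightarrow> 'a set \<Rightarrow> bool" where
  "skew M X Y \<longleftrightarrow> rank M X + rank M Y = rank M (X \<union> Y)"

definition basis :: "'a matroid \<Rightarrow> 'a set \<Rightarrow> bool" where
  "basis M B \<longleftrightarrow> B \<in> indeps M \<and> (\<forall>e \<in> gnd M - B. insert e B \<notin> indeps M)"

definition dual :: "'a matroid \<Rightarrow> 'a matroid" where
  "dual M = Matroid (gnd M) {X. X \<subseteq> gnd M \<and> (\<exists>B. basis M B \<and> X \<inter> B = {})}"

definition cocircuit :: "'a matroid \<Rightarrow> 'a set \<Rightarrow> bool" where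
  "cocircuit M D \<longleftrightarrow> circuit (dual M) D"

definition delete :: "'a matroid \<Rightarrow> 'a \<Rightarrow> 'a matroid" where
  "delete M e = Matroid (gnd M - {e}) {I \<in> indeps M. e \<notin> I}"

definition contract :: "'a matroid \<Rightarrow> 'a set \<Rightarrow> 'a matroid" where
  "contract M X = Matroid (gnd M - X)
     {I. I \<subseteq> gnd M - X \<and> rank M (I \<union> X) = card I + rank M X}"

definition flat :: "'a matroid \<Rightarrow> 'a set \<Rightarrow> bool" where
  "flat M F \<longleftrightarrow> F \<subseteq> gnd M \<and> (\<forall>e \<in> gnd M - F. rank M (insert e F) > rank M F)"

definition connected_matroid :: "'a matroid \<Rightarrow> bool" where
  "connected_matroid M \<longleftrightarrow>
     (\<forall>e \<in> gnd M. \<forall>f \<in> gnd M. e \<noteq> f \<longrightarrow> (\<exists>C. circuit M C \<and> e \<in> C \<and> f \<in> C))"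

definition unbreakable :: "'a matroid \<Rightarrow> bool" where
  "unbreakable M \<longleftrightarrow> connected_matroid M \<and> (\<forall>F. flat M F \<longrightarrow> connected_matroid (contract M F))"

definition SSCE :: "'a matroid \<Rightarrow> bool" where
  "SSCE M \<longleftrightarrow> (\<forall>C1 C2 e1 e2 e. circuit M C1 \<and> circuit M C2 \<and> e1 \<in> C1 - C2 \<and>
      e2 \<in> C2 - C1 \<and> e \<in> C1 \<inter> C2 \<longrightarrow>
      (\<exists>C3. circuit M C3 \<and> {e1, e2} \<subseteq> C3 \<and> C3 \<subseteq> (C1 \<union> C2) - {e}))"

definition has_skew_circuits :: "'a matroid \<Rightarrow> bool" where
  "has_skew_circuits M \<longleftrightarrow> (\<exists>C1 C2. circuit M C1 \<and> circuit M C2 \<and> C1 \<noteq> C2 \<and> skew M C1 C2)"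

inductive series_minor :: "'a matroid \<Rightarrow> 'a matroid \<Rightarrow> bool" where
  refl: "series_minor M M"
| del: "series_minor N M \<Longrightarrow> e \<in> gnd N \<Longrightarrow> series_minor (delete N e) M"
| scon: "series_minor N M \<Longrightarrow> cocircuit N {f, g} \<Longrightarrow> series_minor (contract N {f}) M"

definition iso :: "'a matroid \<Rightarrow> 'b matroid \<Rightarrow> bool" where
  "iso M N \<longleftrightarrow> (\<exists>\<phi>. bij_betw \<phi> (gnd M) (gnd N) \<and>
     (\<forall>X. X \<subseteq> gnd M \<longrightarrow> (X \<in> indeps M \<longleftrightarrow> \<phi> ` X \<in> indeps N)))"

definition uniform :: "nat \<Rightarrow> 'a set \<Rightarrow> 'a matroid" where
  "uniform r X = Matroid X {Y. Y \<subseteq> X \<and> card Y \<le> r}"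

definition series_connection :: "'a matroid \<Rightarrow> 'a matroid \<Rightarrow> 'a \<Rightarrow> 'a matroid" where
  "series_connection M1 M2 p =
     (let circs = {C. circuit M1 C \<and> p \<notin> C} \<union> {C. circuit M2 C \<and> p \<notin> C} \<union>
                  {C1 \<union> C2 | C1 C2. circuit M1 C1 \<and> p \<in> C1 \<and> circuit M2 C2 \<and> p \<in> C2}
      in Matroid (gnd M1 \<union> gnd M2) {X. X \<subseteq> gnd M1 \<union> gnd M2 \<and> (\<forall>C \<in> circs. \<not> C \<subseteq> X)})"

text \<open>S(U_{k-2,k}, U_{l-2,l}): U_{k-2,k} on {0..<k}, U_{l-2,l} on {k-1..<k-1+l},
  sharing exactly the basepoint k-1.\<close>
definition SU :: "nat \<Rightarrow> nat \<Rightarrow> nat matroid" where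
  "SU k l = series_connection (uniform (k - 2) {0..<k}) (uniform (l - 2) {k - 1..<k - 1 + l}) (k - 1)"

end

theory Submission
  imports Defs
begin


lemma wfD:
  assumes "wf_matroid M"
  shows "finite (gnd M)" "indeps M \<subseteq> Pow (gnd M)" "{} \<in> indeps M"
    "\<And>X Y. X \<in> indeps M \<Longrightarrow> Y \<subseteq> X \<Longrightarrow> Y \<in> indeps M"
    "\<And>X Y. X \<in> indeps M \<Longrightarrow> Y \<in> indeps M \<Longrightarrow> card X < card Y \<Longrightarrow> \<exists>e\<in>Y-X. insert e X \<in> indeps M"
  using assms unfolding wf_matroid_def by blast+

lemma indep_sub: "wf_matroid M \<Longrightarrow> I \<in> indeps M \<Longrightarrow> I \<subseteq> gnd M"
  using wfD(2) by blast

lemma indep_fin: "wf_matroid M \<Longrightarrow> I \<in> indeps M \<Longrightarrow> finite I"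
  using indep_sub wfD(1) finite_subset by blast

lemma rank_fin: "wf_matroid M \<Longrightarrow> finite {Y. Y \<subseteq> X \<and> Y \<in> indeps M}"
proof -
  assume w: "wf_matroid M"
  have "{Y. Y \<subseteq> X \<and> Y \<in> indeps M} \<subseteq> Pow (gnd M)" using wfD(2)[OF w] by blast
  then show ?thesis using wfD(1)[OF w] finite_subset by blast
qed

lemma rank_ge: "wf_matroid M \<Longrightarrow> Y \<subseteq> X \<Longrightarrow> Y \<in> indeps M \<Longrightarrow> card Y \<le> rank M X"
  unfolding rank_def by (rule Max_ge) (auto intro: finite_imageI rank_fin)

lemma rank_obtain: assumes "wf_matroid M" shows "\<exists>Y. Y \<subseteq> X \<and> Y \<in> indeps M \<and> card Y = rank M X"
proof -
  have ne: "card ` {Y. Y \<subseteq> X \<and> Y \<in> indeps M} \<noteq> {}" using wfD(3)[OF assms] by (metis (mono_tags, lifting) empty_iff empty_subsetI image_is_empty mem_Collect_eq)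
  have "rank M X \<in> card ` {Y. Y \<subseteq> X \<and> Y \<in> indeps M}"
    unfolding rank_def by (rule Max_in[OF finite_imageI[OF rank_fin[OF assms]] ne])
  then show ?thesis by force
qed

lemma rank_extend:
  assumes w: "wf_matroid M" and "I \<subseteq> X" "I \<in> indeps M"
  shows "\<exists>J. I \<subseteq> J \<and> J \<subseteq> X \<and> J \<in> indeps M \<and> card J = rank M X"
proof -
  define S where "S = {J. I \<subseteq> J \<and> J \<subseteq> X \<and> J \<in> indeps M}"
  have fS: "finite S" using rank_fin[OF w, of X] unfolding S_def by (rule finite_subset[rotated]) auto
  have neS: "S \<noteq> {}" using assms unfolding S_def by blast
  define m where "m = Max (card ` S)"
  have "m \<in> card ` S" unfolding m_def using fS neS by (intro Max_in) auto
  then obtain J where J: "J \<in> S" "card J = m" by blast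
  have mx: "\<And>J'. J' \<in> S \<Longrightarrow> card J' \<le> m" unfolding m_def using fS by (intro Max_ge) auto
  obtain K where K: "K \<subseteq> X" "K \<in> indeps M" "card K = rank M X" using rank_obtain[OF w] by blast
  have "card J \<le> rank M X" using J rank_ge[OF w] unfolding S_def by blast
  moreover have "\<not> card J < rank M X"
  proof
    assume "card J < rank M X"
    then obtain e where e: "e \<in> K - J" "insert e J \<in> indeps M" using wfD(5)[OF w, of J K] J K unfolding S_def by auto
    have "insert e J \<in> S" using e J K unfolding S_def by auto
    moreover have "card (insert e J) = Suc m" using e J indep_fin[OF w] unfolding S_def by auto
    ultimately show False using mx by fastforce
  qed
  ultimately show ?thesis using J unfolding S_def by auto
qed

lemma rank_mono: assumes w: "wf_matroid M" and "X \<subseteq> Y" shows "rank M X \<le> rank M Y"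
proof -
  obtain I where "I \<subseteq> X" "I \<in> indeps M" "card I = rank M X" using rank_obtain[OF w] by blast
  then show ?thesis using rank_ge[OF w, of I Y] assms(2) by auto
qed

lemma rank_le_card: assumes w: "wf_matroid M" and "finite X" shows "rank M X \<le> card X"
proof -
  obtain I where "I \<subseteq> X" "I \<in> indeps M" "card I = rank M X" using rank_obtain[OF w] by blast
  then show ?thesis using card_mono[OF assms(2), of I] by auto
qed

lemma rank_indep: assumes w: "wf_matroid M" and "I \<in> indeps M" shows "rank M I = card I"
  using rank_ge[OF w order_refl assms(2)] rank_le_card[OF w indep_fin[OF w assms(2)]] by linarith

lemma indep_iff_rank: assumes w: "wf_matroid M" and X: "X \<subseteq> gnd M"
  shows "X \<in> indeps M \<longleftrightarrow> rank M X = card X"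
proof
  assume r: "rank M X = card X"
  obtain Y where Y: "Y \<subseteq> X" "Y \<in> indeps M" "card Y = rank M X" using rank_obtain[OF w] by blast
  have f: "finite X" using X wfD(1)[OF w] finite_subset by blast
  have "Y = X" using card_subset_eq[OF f Y(1)] Y(3) r by simp
  then show "X \<in> indeps M" using Y(2) by simp
qed (simp add: rank_indep[OF w])

lemma rank_empty: assumes "wf_matroid M" shows "rank M {} = 0"
  using rank_indep[OF assms wfD(3)[OF assms]] by simp

lemma rank_insert_le: assumes w: "wf_matroid M" shows "rank M (insert e X) \<le> Suc (rank M X)"
proof -
  obtain J where J: "J \<subseteq> insert e X" "J \<in> indeps M" "card J = rank M (insert e X)" using rank_obtain[OF w] by blast
  have "J - {e} \<in> indeps M" using wfD(4)[OF w J(2)] by blast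
  moreover have "J - {e} \<subseteq> X" using J by blast
  ultimately have "card (J - {e}) \<le> rank M X" using rank_ge[OF w] by blast
  moreover have "card J \<le> Suc (card (J - {e}))" using indep_fin[OF w J(2)]
    by (cases "e \<in> J") (simp_all add: card_Diff_singleton)
  ultimately show ?thesis using J by linarith
qed




lemma rank_submod: assumes w: "wf_matroid M"
  shows "rank M (X \<union> Y) + rank M (X \<inter> Y) \<le> rank M X + rank M Y"
proof -
  obtain I where I: "I \<subseteq> X \<inter> Y" "I \<in> indeps M" "card I = rank M (X \<inter> Y)" using rank_obtain[OF w] by blast
  obtain J where J: "I \<subseteq> J" "J \<subseteq> X \<union> Y" "J \<in> indeps M" "card J = rank M (X \<union> Y)"
    using rank_extend[OF w, of I "X \<union> Y"] I by blast
  have fJ: "finite J" using indep_fin[OF w J(3)] .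
  have iX: "J \<inter> X \<in> indeps M" by (rule wfD(4)[OF w J(3)]) (rule Int_lower1)
  have iY: "J \<inter> Y \<in> indeps M" by (rule wfD(4)[OF w J(3)]) (rule Int_lower1)
  have a: "card (J \<inter> X) \<le> rank M X" by (rule rank_ge[OF w _ iX]) (rule Int_lower2)
  have b: "card (J \<inter> Y) \<le> rank M Y" by (rule rank_ge[OF w _ iY]) (rule Int_lower2)
  have fX: "finite (J \<inter> X)" using fJ by simp
  have fY: "finite (J \<inter> Y)" using fJ by simp
  have c: "card (J \<inter> X) + card (J \<inter> Y) = card ((J \<inter> X) \<union> (J \<inter> Y)) + card ((J \<inter> X) \<inter> (J \<inter> Y))"
    by (rule card_Un_Int[OF fX fY])
  have d: "(J \<inter> X) \<union> (J \<inter> Y) = J" using J(2) by blast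
  have s: "I \<subseteq> (J \<inter> X) \<inter> (J \<inter> Y)" using I(1) J(1) by blast
  have e: "card I \<le> card ((J \<inter> X) \<inter> (J \<inter> Y))" by (rule card_mono[OF _ s]) (use fX in simp)
  have c2: "card (J \<inter> X) + card (J \<inter> Y) = card J + card ((J \<inter> X) \<inter> (J \<inter> Y))" using c d by simp
  show ?thesis using a b c2 e I(3) J(4) by linarith
qed

lemma rank_union_le: "wf_matroid M \<Longrightarrow> rank M (X \<union> Y) \<le> rank M X + rank M Y"
  using rank_submod[of M X Y] by linarith

lemma rank_union_card: assumes w: "wf_matroid M" and "finite Y" shows "rank M (X \<union> Y) \<le> rank M X + card Y"
  using rank_union_le[OF w, of X Y] rank_le_card[OF w assms(2)] by linarith

lemma rank_diff_ge: assumes w: "wf_matroid M" and "finite Y" shows "rank M X \<le> rank M (X - Y) + card Y"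
proof -
  have "rank M X \<le> rank M ((X - Y) \<union> Y)" by (rule rank_mono[OF w]) blast
  also have "\<dots> \<le> rank M (X - Y) + card Y" by (rule rank_union_card[OF w assms(2)])
  finally show ?thesis .
qed

lemma cl_mono: assumes w: "wf_matroid M" and "rank M (insert e S) = rank M S" "S \<subseteq> T"
  shows "rank M (insert e T) = rank M T"
proof (cases "e \<in> T")
  case False
  have "rank M (insert e S \<union> T) + rank M (insert e S \<inter> T) \<le> rank M (insert e S) + rank M T"
    by (rule rank_submod[OF w])
  moreover have "insert e S \<union> T = insert e T" "insert e S \<inter> T = S" using False assms(3) by auto
  ultimately have "rank M (insert e T) \<le> rank M T" using assms(2) by simp
  then show ?thesis using rank_mono[OF w subset_insertI[of T e]] by linarith
qed (simp add: insert_absorb)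

lemma cl_union: assumes w: "wf_matroid M" and "finite X" "\<forall>x\<in>X. rank M (insert x S) = rank M S"
  shows "rank M (S \<union> X) = rank M S"
  using assms(2,3)
proof (induction X rule: finite_induct)
  case (insert x F)
  have "rank M (insert x (S \<union> F)) = rank M (S \<union> F)"
    by (rule cl_mono[OF w, of x S]) (use insert in auto)
  then show ?case using insert by simp
qed simp

section \<open>Circuits\<close>

lemma circuit_props: assumes w: "wf_matroid M" and c: "circuit M C"
  shows "C \<subseteq> gnd M" "C \<notin> indeps M" "finite C" "C \<noteq> {}" "\<And>x. x \<in> C \<Longrightarrow> C - {x} \<in> indeps M"
    "rank M C = card C - 1" "\<And>x. x \<in> C \<Longrightarrow> rank M (C - {x}) = rank M C"
proof -
  show 1: "C \<subseteq> gnd M" "C \<notin> indeps M" using c unfolding circuit_def by auto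
  show 2: "finite C" using 1 wfD(1)[OF w] finite_subset by blast
  show 3: "C \<noteq> {}" using 1 wfD(3)[OF w] by auto
  show 4: "\<And>x. x \<in> C \<Longrightarrow> C - {x} \<in> indeps M" using c unfolding circuit_def by blast
  obtain x where x: "x \<in> C" using 3 by blast
  have r1: "rank M C < card C" using 1 indep_iff_rank[OF w 1(1)] rank_le_card[OF w 2] by linarith
  have "rank M (C - {x}) = card C - 1" using rank_indep[OF w 4[OF x]] x 2 by simp
  moreover have "rank M (C - {x}) \<le> rank M C" by (rule rank_mono[OF w]) blast
  ultimately show 5: "rank M C = card C - 1" using r1 by linarith
  fix y assume "y \<in> C"
  then show "rank M (C - {y}) = rank M C" using rank_indep[OF w 4] 2 5 by simp
qed

lemma circuitI: assumes w: "wf_matroid M" and "C \<subseteq> gnd M" "C \<notin> indeps M" "\<forall>x\<in>C. C - {x} \<in> indeps M"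
  shows "circuit M C"
  unfolding circuit_def
proof (intro conjI allI impI)
  fix D assume "D \<subset> C"
  then obtain x where "x \<in> C" "D \<subseteq> C - {x}" by blast
  then have "C - {x} \<in> indeps M" "D \<subseteq> C - {x}" using assms(4) by blast+
  then show "D \<in> indeps M" using wfD(4)[OF w] by blast
qed (use assms in auto)

lemma circuit_subset_eq: "circuit M C \<Longrightarrow> circuit M D \<Longrightarrow> C \<subseteq> D \<Longrightarrow> C = D"
  unfolding circuit_def by blast

lemma dep_has_circuit: assumes w: "wf_matroid M"
  shows "X \<subseteq> gnd M \<Longrightarrow> X \<notin> indeps M \<Longrightarrow> \<exists>C. C \<subseteq> X \<and> circuit M C"
proof (induction "card X" arbitrary: X rule: less_induct)
  case less
  show ?case
  proof (cases "\<forall>x\<in>X. X - {x} \<in> indeps M")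
    case True
    have "circuit M X" by (rule circuitI[OF w less.prems True])
    then show ?thesis by blast
  next
    case False
    then obtain x where x: "x \<in> X" "X - {x} \<notin> indeps M" by blast
    have "finite X" using less.prems(1) wfD(1)[OF w] finite_subset by blast
    then have lt: "card (X - {x}) < card X" using x(1) by (rule card_Diff1_less)
    have sub: "X - {x} \<subseteq> gnd M" using less.prems(1) by blast
    obtain C where "C \<subseteq> X - {x}" "circuit M C" using less.hyps[OF lt sub x(2)] by blast
    then show ?thesis by blast
  qed
qed

lemma cl_circuit: assumes w: "wf_matroid M" and "S \<subseteq> gnd M" "x \<in> gnd M" "x \<notin> S"
  "rank M (insert x S) = rank M S"
  shows "\<exists>C. circuit M C \<and> x \<in> C \<and> C \<subseteq> insert x S"
proof -
  obtain I where I: "I \<subseteq> S" "I \<in> indeps M" "card I = rank M S" using rank_obtain[OF w] by blast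
  have fI: "finite I" using indep_fin[OF w I(2)] .
  have "insert x I \<notin> indeps M"
  proof
    assume "insert x I \<in> indeps M"
    moreover have "insert x I \<subseteq> insert x S" using I(1) by blast
    ultimately have "card (insert x I) \<le> rank M (insert x S)" using rank_ge[OF w] by blast
    moreover have "x \<notin> I" using I(1) assms(4) by blast
    ultimately show False using I(3) fI assms(5) by simp
  qed
  moreover have "insert x I \<subseteq> gnd M" using I assms by blast
  ultimately obtain C where C: "C \<subseteq> insert x I" "circuit M C" using dep_has_circuit[OF w] by blast
  have "x \<in> C"
  proof (rule ccontr)
    assume "x \<notin> C"
    then have "C \<subseteq> I" using C by blast
    then have "C \<in> indeps M" by (rule wfD(4)[OF w I(2)])
    then show False using C unfolding circuit_def by blast
  qed
  then show ?thesis using C I by blast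
qed

lemma circuit_cl: assumes w: "wf_matroid M" and c: "circuit M C" and x: "x \<in> C" and S: "C - {x} \<subseteq> S"
  shows "rank M (insert x S) = rank M S"
proof -
  have "rank M (insert x (C - {x})) = rank M (C - {x})"
    using circuit_props(7)[OF w c x] x by (simp add: insert_absorb)
  then show ?thesis using cl_mono[OF w] S by blast
qed

lemma strong_elim: assumes w: "wf_matroid M" and c1: "circuit M C1" and c2: "circuit M C2"
  and e: "e \<in> C1 \<inter> C2" and f: "f \<in> C1 - C2"
  shows "\<exists>C. circuit M C \<and> f \<in> C \<and> C \<subseteq> (C1 \<union> C2) - {e}"
proof -
  define Y where "Y = (C1 \<union> C2) - {e, f}"
  have ef: "e \<noteq> f" using e f by blast
  have 1: "rank M (insert e Y) = rank M Y"
    by (rule circuit_cl[OF w c2]) (use e f in \<open>auto simp: Y_def\<close>)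
  have 2: "rank M (insert f (insert e Y)) = rank M (insert e Y)"
    by (rule circuit_cl[OF w c1]) (use e f in \<open>auto simp: Y_def\<close>)
  have "rank M (insert f Y) \<le> rank M (insert f (insert e Y))" by (rule rank_mono[OF w]) blast
  then have 3: "rank M (insert f Y) = rank M Y" using 1 2 rank_mono[OF w subset_insertI[of Y f]] by linarith
  have sub: "Y \<subseteq> gnd M" "f \<in> gnd M" using circuit_props(1)[OF w c1] circuit_props(1)[OF w c2] f
    unfolding Y_def by auto
  have fY: "f \<notin> Y" unfolding Y_def by blast
  obtain C where "circuit M C" "f \<in> C" "C \<subseteq> insert f Y"
    using cl_circuit[OF w sub fY 3] by blast
  moreover have "insert f Y \<subseteq> (C1 \<union> C2) - {e}" using f ef unfolding Y_def by auto
  ultimately show ?thesis by blast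
qed

lemma trans_circ: assumes w: "wf_matroid M"
  shows "circuit M C1 \<Longrightarrow> circuit M C2 \<Longrightarrow> C1 \<inter> C2 \<noteq> {} \<Longrightarrow> x \<in> C1 \<Longrightarrow> z \<in> C2 \<Longrightarrow>
    \<exists>C. circuit M C \<and> x \<in> C \<and> z \<in> C \<and> C \<subseteq> C1 \<union> C2"
proof (induction "card (C1 \<union> C2)" arbitrary: C1 C2 rule: less_induct)
  case less
  show ?case
  proof (cases "x \<in> C2 \<or> z \<in> C1")
    case True
    then show ?thesis using less.prems by blast
  next
    case False
    obtain y where y: "y \<in> C1 \<inter> C2" using less.prems by blast
    obtain C3 where C3: "circuit M C3" "x \<in> C3" "C3 \<subseteq> (C1 \<union> C2) - {y}"
      using strong_elim[OF w less.prems(1,2) y, of x] less.prems False by blast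
    obtain C4 where C4: "circuit M C4" "z \<in> C4" "C4 \<subseteq> (C1 \<union> C2) - {y}"
      using strong_elim[OF w less.prems(2,1), of y z] y less.prems False by blast
    have fin: "finite (C1 \<union> C2)" using circuit_props(3)[OF w] less.prems by blast
    show ?thesis
    proof (cases "C3 \<inter> C4 = {}")
      case False
      have "card (C3 \<union> C4) < card (C1 \<union> C2)"
        using C3 C4 y fin by (intro psubset_card_mono) auto
      then obtain C where "circuit M C \<and> x \<in> C \<and> z \<in> C \<and> C \<subseteq> C3 \<union> C4"
        using less.hyps[of C3 C4] C3 C4 False by blast
      then show ?thesis using C3 C4 by blast
    next
      case True
      have "\<not> C4 \<subseteq> C2"
      proof
        assume "C4 \<subseteq> C2"
        then have "C4 = C2" using circuit_subset_eq C4 less.prems by blast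
        then show False using C4 y by blast
      qed
      then obtain w' where w': "w' \<in> C4" "w' \<notin> C2" by blast
      have "\<not> C3 \<subseteq> C1"
      proof
        assume "C3 \<subseteq> C1"
        then have "C3 = C1" using circuit_subset_eq C3 less.prems by blast
        then show False using C3 y by blast
      qed
      then obtain w where ww: "w \<in> C3" "w \<notin> C1" by blast
      have "w \<in> C2" using ww C3 by blast
      have "w' \<notin> C3" using True w' by blast
      have "w' \<in> C1" using w' C4 by blast
      have "card (C3 \<union> C2) < card (C1 \<union> C2)"
        using C3 fin \<open>w' \<notin> C3\<close> \<open>w' \<in> C1\<close> w' by (intro psubset_card_mono) auto
      then obtain C where "circuit M C \<and> x \<in> C \<and> z \<in> C \<and> C \<subseteq> C3 \<union> C2"
        using less.hyps[of C3 C2] C3 less.prems \<open>w \<in> C2\<close> ww by blast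
      then show ?thesis using C3 by blast
    qed
  qed
qed




lemma sep_rank: assumes w: "wf_matroid M" and d: "A \<inter> B = {}"
  and nc: "\<And>C. circuit M C \<Longrightarrow> C \<subseteq> A \<union> B \<Longrightarrow> C \<subseteq> A \<or> C \<subseteq> B"
  shows "rank M (A \<union> B) = rank M A + rank M B"
proof -
  obtain I where I: "I \<subseteq> A" "I \<in> indeps M" "card I = rank M A" using rank_obtain[OF w] by blast
  obtain J where J: "J \<subseteq> B" "J \<in> indeps M" "card J = rank M B" using rank_obtain[OF w] by blast
  have IJ: "I \<union> J \<in> indeps M"
  proof (rule ccontr)
    assume n: "I \<union> J \<notin> indeps M"
    have "I \<union> J \<subseteq> gnd M" using indep_sub[OF w I(2)] indep_sub[OF w J(2)] by blast
    then obtain C where C: "C \<subseteq> I \<union> J" "circuit M C" using dep_has_circuit[OF w _ n] by blast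
    have "C \<subseteq> A \<union> B" using C(1) I(1) J(1) by blast
    then have "C \<subseteq> A \<or> C \<subseteq> B" using nc C(2) by blast
    then have "C \<subseteq> I \<or> C \<subseteq> J" using C(1) I(1) J(1) d by blast
    then have "C \<in> indeps M" using wfD(4)[OF w I(2)] wfD(4)[OF w J(2)] by blast
    then show False using circuit_props(2)[OF w C(2)] by blast
  qed
  have "I \<inter> J = {}" using I(1) J(1) d by blast
  then have "card (I \<union> J) = card I + card J"
    using indep_fin[OF w I(2)] indep_fin[OF w J(2)] by (simp add: card_Un_disjoint)
  moreover have "I \<union> J \<subseteq> A \<union> B" using I(1) J(1) by blast
  ultimately have "rank M A + rank M B \<le> rank M (A \<union> B)" using rank_ge[OF w _ IJ] I(3) J(3) by metis
  then show ?thesis using rank_union_le[OF w, of A B] by linarith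
qed

lemma hered: assumes w: "wf_matroid M" and d: "A \<inter> B = {}" and sk: "rank M A + rank M B = rank M (A \<union> B)"
  and S: "S \<subseteq> A" and T: "T \<subseteq> B"
  shows "rank M S + rank M T = rank M (S \<union> T)"
proof -
  have s1: "rank M ((A \<union> T) \<union> B) + rank M ((A \<union> T) \<inter> B) \<le> rank M (A \<union> T) + rank M B"
    by (rule rank_submod[OF w])
  have e1: "(A \<union> T) \<union> B = A \<union> B" "(A \<union> T) \<inter> B = T" using d T by blast+
  have s2: "rank M ((S \<union> T) \<union> A) + rank M ((S \<union> T) \<inter> A) \<le> rank M (S \<union> T) + rank M A"
    by (rule rank_submod[OF w])
  have e2: "(S \<union> T) \<union> A = A \<union> T" "(S \<union> T) \<inter> A = S" using d S T by blast+
  have "rank M S + rank M T \<le> rank M (S \<union> T)" using s1 s2 e1 e2 sk by simp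
  then show ?thesis using rank_union_le[OF w, of S T] by linarith
qed

lemma no_cross: assumes w: "wf_matroid M" and d: "A \<inter> B = {}" and sk: "rank M A + rank M B = rank M (A \<union> B)"
  and c: "circuit M C" and CAB: "C \<subseteq> A \<union> B"
  shows "C \<subseteq> A \<or> C \<subseteq> B"
proof (rule ccontr)
  assume "\<not> (C \<subseteq> A \<or> C \<subseteq> B)"
  then obtain x y where xy: "x \<in> C" "x \<notin> B" "y \<in> C" "y \<notin> A" by blast
  have fC: "finite C" using circuit_props(3)[OF w c] .
  have iA: "C \<inter> A \<in> indeps M"
    by (rule wfD(4)[OF w circuit_props(5)[OF w c xy(3)]]) (use xy in blast)
  have iB: "C \<inter> B \<in> indeps M"
    by (rule wfD(4)[OF w circuit_props(5)[OF w c xy(1)]]) (use xy in blast)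
  have "rank M (C \<inter> A) + rank M (C \<inter> B) = rank M ((C \<inter> A) \<union> (C \<inter> B))"
    by (rule hered[OF w d sk]) blast+
  moreover have "(C \<inter> A) \<union> (C \<inter> B) = C" using CAB by blast
  moreover have "card (C \<inter> A) + card (C \<inter> B) = card C"
  proof -
    have "card ((C \<inter> A) \<union> (C \<inter> B)) = card (C \<inter> A) + card (C \<inter> B)"
      by (rule card_Un_disjoint) (use fC d in auto)
    then show ?thesis using CAB by (metis Int_Un_distrib Int_absorb2)
  qed
  ultimately have "card C = rank M C" using rank_indep[OF w iA] rank_indep[OF w iB] by simp
  moreover have "card C \<noteq> 0" using circuit_props(3,4)[OF w c] by simp
  ultimately show False using circuit_props(6)[OF w c] by linarith
qed

lemma skew_disjoint: assumes w: "wf_matroid M" and c1: "circuit M C1" and c2: "circuit M C2"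
  and ne: "C1 \<noteq> C2" and sk: "skew M C1 C2"
  shows "C1 \<inter> C2 = {}"
proof (rule ccontr)
  assume nd: "C1 \<inter> C2 \<noteq> {}"
  have "rank M (C1 \<union> C2) + rank M (C1 \<inter> C2) \<le> rank M C1 + rank M C2" by (rule rank_submod[OF w])
  then have r0: "rank M (C1 \<inter> C2) = 0" using sk unfolding skew_def by linarith
  have "\<not> C1 \<subseteq> C2" using circuit_subset_eq[OF c1 c2] ne by blast
  then obtain x where x: "x \<in> C1" "x \<notin> C2" by blast
  have "C1 \<inter> C2 \<in> indeps M" by (rule wfD(4)[OF w circuit_props(5)[OF w c1 x(1)]]) (use x in blast)
  then have "rank M (C1 \<inter> C2) = card (C1 \<inter> C2)" by (rule rank_indep[OF w])
  moreover have "finite (C1 \<inter> C2)" using circuit_props(3)[OF w c1] by simp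
  ultimately show False using r0 nd by simp
qed

lemma noskew_SSCE: assumes w: "wf_matroid M" and ns: "\<not> has_skew_circuits M"
  shows "SSCE M"
  unfolding SSCE_def
proof (intro allI impI)
  fix C1 C2 e1 e2 e
  assume h: "circuit M C1 \<and> circuit M C2 \<and> e1 \<in> C1 - C2 \<and> e2 \<in> C2 - C1 \<and> e \<in> C1 \<inter> C2"
  then have c1: "circuit M C1" and c2: "circuit M C2" and e1: "e1 \<in> C1 - C2" and e2: "e2 \<in> C2 - C1"
    and e: "e \<in> C1 \<inter> C2" by auto
  define X where "X = (C1 \<union> C2) - {e}"
  obtain D1 where D1: "circuit M D1" "e1 \<in> D1" "D1 \<subseteq> X" using strong_elim[OF w c1 c2 e e1] unfolding X_def by blast
  have e': "e \<in> C2 \<inter> C1" using e by blast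
  obtain D2 where D2: "circuit M D2" "e2 \<in> D2" "D2 \<subseteq> X" using strong_elim[OF w c2 c1 e' e2] unfolding X_def by blast
  define K where "K = {z. \<exists>C. circuit M C \<and> C \<subseteq> X \<and> e1 \<in> C \<and> z \<in> C}"
  show "\<exists>C3. circuit M C3 \<and> {e1, e2} \<subseteq> C3 \<and> C3 \<subseteq> C1 \<union> C2 - {e}"
  proof (cases "e2 \<in> K")
    case True
    then show ?thesis unfolding K_def X_def by blast
  next
    case False
    have closed: "C \<subseteq> K" if C: "circuit M C" "C \<subseteq> X" "C \<inter> K \<noteq> {}" for C
    proof
      fix u assume u: "u \<in> C"
      obtain z where z: "z \<in> C" "z \<in> K" using C(3) by blast
      then obtain C' where C': "circuit M C'" "C' \<subseteq> X" "e1 \<in> C'" "z \<in> C'" unfolding K_def by blast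
      have "C' \<inter> C \<noteq> {}" using z C' by blast
      then obtain C'' where "circuit M C''" "e1 \<in> C''" "u \<in> C''" "C'' \<subseteq> C' \<union> C"
        using trans_circ[OF w C'(1) C(1) _ C'(3) u] by blast
      then show "u \<in> K" unfolding K_def using C'(2) C(2) by blast
    qed
    have "e1 \<in> K" unfolding K_def using D1 by blast
    then have D1K: "D1 \<subseteq> K" using closed[OF D1(1,3)] D1(2) by blast
    have D2K: "D2 \<inter> K = {}" using closed[OF D2(1,3)] D2(2) False by blast
    have "rank M (D1 \<union> D2) = rank M D1 + rank M D2"
    proof (rule sep_rank[OF w])
      show "D1 \<inter> D2 = {}" using D1K D2K by blast
    next
      fix C assume C: "circuit M C" "C \<subseteq> D1 \<union> D2"
      then have "C \<subseteq> X" using D1(3) D2(3) by blast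
      then have "C \<subseteq> K \<or> C \<inter> K = {}" using closed[OF C(1)] by blast
      then show "C \<subseteq> D1 \<or> C \<subseteq> D2" using C(2) D1K D2K by blast
    qed
    then have rk: "rank M D1 + rank M D2 = rank M (D1 \<union> D2)" by simp
    have ne12: "D1 \<noteq> D2" using D1K D2K D2(2) False by blast
    have "has_skew_circuits M" unfolding has_skew_circuits_def skew_def using D1(1) D2(1) ne12 rk by blast
    then show ?thesis using ns by blast
  qed
qed

lemma SSCE_noskew: assumes w: "wf_matroid M" and conn: "connected_matroid M" and ss: "SSCE M"
  shows "\<not> has_skew_circuits M"
proof
  assume "has_skew_circuits M"
  then obtain C1 C2 where c1: "circuit M C1" and c2: "circuit M C2" and ne: "C1 \<noteq> C2" and sk: "skew M C1 C2"
    unfolding has_skew_circuits_def by blast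
  have disj: "C1 \<inter> C2 = {}" by (rule skew_disjoint[OF w c1 c2 ne sk])
  have sk': "rank M C1 + rank M C2 = rank M (C1 \<union> C2)" using sk unfolding skew_def .
  have nc: "D \<subseteq> C1 \<or> D \<subseteq> C2" if "circuit M D" "D \<subseteq> C1 \<union> C2" for D
    using no_cross[OF w disj sk' that] .
  have sse: "\<exists>C3. circuit M C3 \<and> {x1, x2} \<subseteq> C3 \<and> C3 \<subseteq> (A \<union> B) - {x}"
    if "circuit M A" "circuit M B" "x1 \<in> A - B" "x2 \<in> B - A" "x \<in> A \<inter> B" for A B x1 x2 x
    using ss that unfolding SSCE_def by blast
  obtain a where a: "a \<in> C1" using circuit_props(4)[OF w c1] by blast
  obtain b where b: "b \<in> C2" using circuit_props(4)[OF w c2] by blast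
  have "a \<noteq> b" using a b disj by blast
  moreover have "a \<in> gnd M" "b \<in> gnd M" using a b circuit_props(1)[OF w c1] circuit_props(1)[OF w c2] by blast+
  ultimately obtain D0 where D0: "circuit M D0" "a \<in> D0" "b \<in> D0" using conn unfolding connected_matroid_def by blast
  define Cn where "Cn D \<longleftrightarrow> circuit M D \<and> D \<inter> C1 \<noteq> {} \<and> D \<inter> C2 \<noteq> {}" for D
  define m where "m D = card (D - (C1 \<union> C2))" for D
  have "Cn D0" unfolding Cn_def using D0 a b by blast
  then obtain D where D: "Cn D" and mn: "\<And>D'. Cn D' \<Longrightarrow> m D \<le> m D'"
    using ex_has_least_nat[of Cn D0 m] by blast
  have cD: "circuit M D" using D unfolding Cn_def by blast
  define P where "P = D - (C1 \<union> C2)"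
  have fP: "finite P" unfolding P_def using circuit_props(3)[OF w cD] by simp
  have sub: "P \<subseteq> D'" if "Cn D'" "D' - (C1 \<union> C2) \<subseteq> P" for D'
  proof -
    have "card P \<le> card (D' - (C1 \<union> C2))" using mn[OF that(1)] unfolding m_def P_def .
    moreover have "card (D' - (C1 \<union> C2)) \<le> card P" by (rule card_mono[OF fP that(2)])
    ultimately have eq: "card (D' - (C1 \<union> C2)) = card P" by linarith
    have "D' - (C1 \<union> C2) = P" by (rule card_subset_eq[OF fP that(2) eq])
    then show ?thesis by blast
  qed
  have Pne: "P \<noteq> {}"
  proof
    assume "P = {}"
    then have "D \<subseteq> C1 \<union> C2" unfolding P_def by blast
    then have "D \<subseteq> C1 \<or> D \<subseteq> C2" using nc[OF cD] by blast
    then show False using D disj unfolding Cn_def by blast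
  qed
  obtain a1 where a1: "a1 \<in> D" "a1 \<in> C1" using D unfolding Cn_def by blast
  obtain b1 where b1: "b1 \<in> D" "b1 \<in> C2" using D unfolding Cn_def by blast
  have "\<not> C1 \<subseteq> D"
  proof
    assume "C1 \<subseteq> D"
    then have "C1 = D" using circuit_subset_eq[OF c1 cD] by blast
    then show False using b1 disj by blast
  qed
  then obtain c where c: "c \<in> C1" "c \<notin> D" by blast
  have "\<not> C2 \<subseteq> D"
  proof
    assume "C2 \<subseteq> D"
    then have "C2 = D" using circuit_subset_eq[OF c2 cD] by blast
    then show False using a1 disj by blast
  qed
  then obtain c' where c': "c' \<in> C2" "c' \<notin> D" by blast
  have b1n: "b1 \<notin> C1" using b1 disj by blast
  obtain D' where D': "circuit M D'" "{c, b1} \<subseteq> D'" "D' \<subseteq> (C1 \<union> D) - {a1}"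
    using sse[OF c1 cD, of c b1 a1] c b1 b1n a1 by blast
  have CnD': "Cn D'" unfolding Cn_def using D' c b1 by blast
  have "D' - (C1 \<union> C2) \<subseteq> P" using D'(3) unfolding P_def by blast
  then have PD': "P \<subseteq> D'" using sub[OF CnD'] by blast
  have c'D': "c' \<notin> D'" using D'(3) c' disj by blast
  have cC2: "c \<notin> C2" using c disj by blast
  obtain D'' where D'': "circuit M D''" "{c', c} \<subseteq> D''" "D'' \<subseteq> (C2 \<union> D') - {b1}"
    using sse[OF c2 D'(1), of c' c b1] c' c'D' D' cC2 b1 by blast
  have CnD'': "Cn D''" unfolding Cn_def using D'' c c' by blast
  have "D'' - (C1 \<union> C2) \<subseteq> P" using D''(3) D'(3) unfolding P_def by blast
  then have PD'': "P \<subseteq> D''" using sub[OF CnD''] by blast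
  obtain p where p: "p \<in> P" using Pne by blast
  have a1D'': "a1 \<notin> D''" using D''(3) D'(3) a1 disj by blast
  obtain D3 where D3: "circuit M D3" "{a1, c'} \<subseteq> D3" "D3 \<subseteq> (D \<union> D'') - {p}"
    using sse[OF cD D''(1), of a1 c' p] a1 a1D'' c' D'' p PD'' unfolding P_def by blast
  have CnD3: "Cn D3" unfolding Cn_def using D3 a1 c' by blast
  have "D3 - (C1 \<union> C2) \<subseteq> P - {p}" using D3(3) D''(3) D'(3) unfolding P_def by blast
  then have "m D3 < m D" unfolding m_def P_def[symmetric]
    using fP p by (meson card_Diff1_less card_mono finite_Diff le_less_trans)
  then show False using mn[OF CnD3] by linarith
qed




section \<open>Matroids from rank functions\<close>

locale rkf =
  fixes G :: "'a set" and \<rho> :: "'a set \<Rightarrow> nat"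
  assumes finG: "finite G" and r0: "\<rho> {} = 0"
    and runit: "\<And>X e. X \<subseteq> G \<Longrightarrow> e \<in> G \<Longrightarrow> \<rho> (insert e X) \<le> Suc (\<rho> X)"
    and rmono: "\<And>X Y. X \<subseteq> Y \<Longrightarrow> Y \<subseteq> G \<Longrightarrow> \<rho> X \<le> \<rho> Y"
    and rsub: "\<And>X Y. X \<subseteq> G \<Longrightarrow> Y \<subseteq> G \<Longrightarrow> \<rho> (X \<union> Y) + \<rho> (X \<inter> Y) \<le> \<rho> X + \<rho> Y"
begin

lemma add_le: "finite S \<Longrightarrow> X \<union> S \<subseteq> G \<Longrightarrow> \<rho> (X \<union> S) \<le> \<rho> X + card S"
proof (induction S rule: finite_induct)
  case (insert e S)
  have "\<rho> (insert e (X \<union> S)) \<le> Suc (\<rho> (X \<union> S))" by (rule runit) (use insert.prems in auto)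
  then show ?case using insert by simp
qed simp

lemma le_card: assumes "X \<subseteq> G" shows "\<rho> X \<le> card X"
proof -
  have "finite X" using assms finG finite_subset by blast
  then have "\<rho> ({} \<union> X) \<le> \<rho> {} + card X" by (rule add_le) (use assms in simp)
  then show ?thesis using r0 by simp
qed

lemma down: assumes "I \<subseteq> G" "\<rho> I = card I" "J \<subseteq> I" shows "\<rho> J = card J"
proof -
  have fI: "finite I" using assms(1) finG finite_subset by blast
  have "\<rho> (J \<union> (I - J)) \<le> \<rho> J + card (I - J)" by (rule add_le) (use fI assms in auto)
  moreover have "J \<union> (I - J) = I" using assms(3) by blast
  ultimately have a: "\<rho> I \<le> \<rho> J + card (I - J)" by simp
  moreover have "card I = card J + card (I - J)"
  proof -
    have fJ: "finite J" using fI assms(3) finite_subset by blast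
    have "card (I - J) = card I - card J" by (rule card_Diff_subset[OF fJ assms(3)])
    moreover have "card J \<le> card I" by (rule card_mono[OF fI assms(3)])
    ultimately show ?thesis by linarith
  qed
  ultimately have "card J \<le> \<rho> J" using assms(2) by linarith
  moreover have "\<rho> J \<le> card J" by (rule le_card) (use assms in blast)
  ultimately show ?thesis by linarith
qed

lemma exists_basis: assumes "X \<subseteq> G" shows "\<exists>I. I \<subseteq> X \<and> \<rho> I = card I \<and> card I = \<rho> X"
proof -
  have fX: "finite X" using assms finG finite_subset by blast
  show ?thesis using fX assms
  proof (induction X rule: finite_induct)
    case empty
    then show ?case using r0 by auto
  next
    case (insert e F)
    then obtain I where I: "I \<subseteq> F" "\<rho> I = card I" "card I = \<rho> F" by blast
    have FG: "F \<subseteq> G" "e \<in> G" using insert.prems by auto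
    have u: "\<rho> (insert e F) \<le> Suc (\<rho> F)" by (rule runit[OF FG])
    have m: "\<rho> F \<le> \<rho> (insert e F)" by (rule rmono) (use insert.prems in auto)
    show ?case
    proof (cases "\<rho> (insert e F) = \<rho> F")
      case True
      then show ?thesis using I by auto
    next
      case False
      then have s: "\<rho> (insert e F) = Suc (\<rho> F)" using u m by linarith
      have "\<rho> (insert e I \<union> F) + \<rho> (insert e I \<inter> F) \<le> \<rho> (insert e I) + \<rho> F"
        by (rule rsub) (use I FG in auto)
      moreover have "insert e I \<union> F = insert e F" "insert e I \<inter> F = I" using I(1) insert.hyps(2) by auto
      ultimately have "Suc (card I) \<le> \<rho> (insert e I)" using s I by simp
      moreover have "e \<notin> I" using I(1) insert.hyps(2) by blast
      moreover have "finite I" using I(1) insert.hyps(1) finite_subset by blast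
      moreover have "\<rho> (insert e I) \<le> card (insert e I)" by (rule le_card) (use I FG in auto)
      ultimately have "\<rho> (insert e I) = card (insert e I)" by simp
      moreover have "card (insert e I) = \<rho> (insert e F)" using s I \<open>e \<notin> I\<close> \<open>finite I\<close> by simp
      ultimately show ?thesis using I(1) by (intro exI[of _ "insert e I"]) auto
    qed
  qed
qed

lemma cl_un: assumes "finite S" "X \<subseteq> G" "S \<subseteq> G" "\<forall>e\<in>S. \<rho> (insert e X) = \<rho> X"
  shows "\<rho> (X \<union> S) = \<rho> X"
  using assms
proof (induction S rule: finite_induct)
  case (insert e S)
  then have IH: "\<rho> (X \<union> S) = \<rho> X" by auto
  have "\<rho> ((X \<union> S) \<union> insert e X) + \<rho> ((X \<union> S) \<inter> insert e X) \<le> \<rho> (X \<union> S) + \<rho> (insert e X)"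
    by (rule rsub) (use insert.prems in auto)
  moreover have "(X \<union> S) \<union> insert e X = X \<union> insert e S" by auto
  moreover have "(X \<union> S) \<inter> insert e X = X" using insert.hyps(2) by auto
  moreover have "\<rho> (insert e X) = \<rho> X" using insert.prems by auto
  ultimately have "\<rho> (X \<union> insert e S) \<le> \<rho> X" using IH by simp
  moreover have "\<rho> X \<le> \<rho> (X \<union> insert e S)" by (rule rmono) (use insert.prems in auto)
  ultimately show ?case by linarith
qed simp

lemma wf: "wf_matroid (Matroid G {I. I \<subseteq> G \<and> \<rho> I = card I})"
  unfolding wf_matroid_def
proof (intro conjI allI impI)
  fix X Y assume h: "X \<in> indeps (Matroid G {I. I \<subseteq> G \<and> \<rho> I = card I}) \<and> Y \<subseteq> X"
  then show "Y \<in> indeps (Matroid G {I. I \<subseteq> G \<and> \<rho> I = card I})" using down[of X Y] by auto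
next
  fix X Y assume h: "X \<in> indeps (Matroid G {I. I \<subseteq> G \<and> \<rho> I = card I}) \<and>
           Y \<in> indeps (Matroid G {I. I \<subseteq> G \<and> \<rho> I = card I}) \<and> card X < card Y"
  then have X: "X \<subseteq> G" "\<rho> X = card X" and Y: "Y \<subseteq> G" "\<rho> Y = card Y" and lt: "card X < card Y" by auto
  have fX: "finite X" using X finG finite_subset by blast
  show "\<exists>e\<in>Y - X. insert e X \<in> indeps (Matroid G {I. I \<subseteq> G \<and> \<rho> I = card I})"
  proof (rule ccontr)
    assume n: "\<not> ?thesis"
    have eq: "\<forall>e\<in>Y - X. \<rho> (insert e X) = \<rho> X"
    proof
      fix e assume e: "e \<in> Y - X"
      then have "\<rho> (insert e X) \<noteq> card (insert e X)" using n X Y by auto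
      moreover have "card (insert e X) = Suc (\<rho> X)" using e fX X by simp
      moreover have "\<rho> (insert e X) \<le> Suc (\<rho> X)" by (rule runit) (use X Y e in auto)
      moreover have "\<rho> X \<le> \<rho> (insert e X)" by (rule rmono) (use X Y e in auto)
      ultimately show "\<rho> (insert e X) = \<rho> X" by linarith
    qed
    have fY: "finite (Y - X)" using Y finG finite_subset by blast
    have "\<rho> (X \<union> (Y - X)) = \<rho> X" by (rule cl_un[OF fY X(1) _ eq]) (use Y in blast)
    moreover have "\<rho> Y \<le> \<rho> (X \<union> (Y - X))" by (rule rmono) (use X Y in auto)
    ultimately show False using X Y lt by linarith
  qed
qed (use finG r0 in auto)

lemma rank_eq: assumes "X \<subseteq> G" shows "rank (Matroid G {I. I \<subseteq> G \<and> \<rho> I = card I}) X = \<rho> X"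
proof -
  let ?A = "card ` {Y. Y \<subseteq> X \<and> Y \<in> indeps (Matroid G {I. I \<subseteq> G \<and> \<rho> I = card I})}"
  have fin: "finite ?A" using rank_fin[OF wf] by blast
  obtain I where I: "I \<subseteq> X" "\<rho> I = card I" "card I = \<rho> X" using exists_basis[OF assms] by blast
  have in1: "\<rho> X \<in> ?A" using I assms by (intro image_eqI[of _ _ I]) auto
  have le: "\<forall>a\<in>?A. a \<le> \<rho> X"
  proof
    fix a assume "a \<in> ?A"
    then obtain Y where Y: "Y \<subseteq> X" "Y \<subseteq> G" "\<rho> Y = card Y" "a = card Y" by auto
    then show "a \<le> \<rho> X" using rmono[of Y X] assms by simp
  qed
  show ?thesis unfolding rank_def by (rule Max_eqI[OF fin]) (use le in1 in auto)
qed

end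

lemma rkf_rank: assumes w: "wf_matroid M" shows "rkf (gnd M) (rank M)"
proof
  show "finite (gnd M)" using wfD(1)[OF w] .
  show "rank M {} = 0" using rank_empty[OF w] .
  show "\<And>X e. rank M (insert e X) \<le> Suc (rank M X)" using rank_insert_le[OF w] .
  show "\<And>X Y. X \<subseteq> Y \<Longrightarrow> rank M X \<le> rank M Y" using rank_mono[OF w] .
  show "\<And>X Y. rank M (X \<union> Y) + rank M (X \<inter> Y) \<le> rank M X + rank M Y" using rank_submod[OF w] .
qed

section \<open>Dual\<close>

lemma basis_iff: assumes w: "wf_matroid M"
  shows "basis M B \<longleftrightarrow> B \<in> indeps M \<and> card B = rank M (gnd M)"
proof
  assume b: "basis M B"
  then have iB: "B \<in> indeps M" unfolding basis_def by blast
  have BE: "B \<subseteq> gnd M" by (rule indep_sub[OF w iB])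
  obtain J where J: "B \<subseteq> J" "J \<subseteq> gnd M" "J \<in> indeps M" "card J = rank M (gnd M)"
    using rank_extend[OF w BE iB] by blast
  have "J = B"
  proof (rule ccontr)
    assume "J \<noteq> B"
    then obtain e where e: "e \<in> J" "e \<notin> B" using J(1) by blast
    have "insert e B \<in> indeps M" by (rule wfD(4)[OF w J(3)]) (use e J(1) in blast)
    moreover have "e \<in> gnd M - B" using e J(2) by blast
    ultimately show False using b unfolding basis_def by blast
  qed
  then show "B \<in> indeps M \<and> card B = rank M (gnd M)" using J iB by simp
next
  assume h: "B \<in> indeps M \<and> card B = rank M (gnd M)"
  have fB: "finite B" using indep_fin[OF w] h by blast
  show "basis M B" unfolding basis_def
  proof (intro conjI ballI)
    show "B \<in> indeps M" using h by blast
    fix e assume e: "e \<in> gnd M - B"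
    show "insert e B \<notin> indeps M"
    proof
      assume i: "insert e B \<in> indeps M"
      have "insert e B \<subseteq> gnd M" using indep_sub[OF w i] .
      then have "card (insert e B) \<le> rank M (gnd M)" using rank_ge[OF w _ i] by blast
      then show False using h e fB by simp
    qed
  qed
qed

definition drk :: "'a matroid \<Rightarrow> 'a set \<Rightarrow> nat" where
  "drk M X = card X + rank M (gnd M - X) - rank M (gnd M)"

lemma drk_eq: assumes w: "wf_matroid M" and X: "X \<subseteq> gnd M"
  shows "drk M X + rank M (gnd M) = card X + rank M (gnd M - X)"
proof -
  have "finite X" using X wfD(1)[OF w] finite_subset by blast
  then have "rank M (gnd M) \<le> rank M (gnd M - X) + card X" by (rule rank_diff_ge[OF w])
  then show ?thesis unfolding drk_def by linarith
qed

lemma dual_alt: assumes w: "wf_matroid M"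
  shows "dual M = Matroid (gnd M) {I. I \<subseteq> gnd M \<and> drk M I = card I}"
proof -
  have "(\<exists>B. basis M B \<and> X \<inter> B = {}) \<longleftrightarrow> drk M X = card X" if X: "X \<subseteq> gnd M" for X
  proof
    assume "\<exists>B. basis M B \<and> X \<inter> B = {}"
    then obtain B where B: "basis M B" "X \<inter> B = {}" by blast
    have iB: "B \<in> indeps M" "card B = rank M (gnd M)" using B(1) basis_iff[OF w] by blast+
    have "B \<subseteq> gnd M - X" using indep_sub[OF w iB(1)] B(2) by blast
    then have "rank M (gnd M) \<le> rank M (gnd M - X)" using rank_ge[OF w _ iB(1)] iB(2) by simp
    moreover have "rank M (gnd M - X) \<le> rank M (gnd M)" by (rule rank_mono[OF w]) blast
    ultimately show "drk M X = card X" using drk_eq[OF w X] by linarith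
  next
    assume d: "drk M X = card X"
    have "rank M (gnd M - X) \<le> rank M (gnd M)" by (rule rank_mono[OF w]) blast
    then have eq: "rank M (gnd M - X) = rank M (gnd M)" using drk_eq[OF w X] d by linarith
    obtain B where B: "B \<subseteq> gnd M - X" "B \<in> indeps M" "card B = rank M (gnd M - X)"
      using rank_obtain[OF w] by blast
    have "basis M B" using basis_iff[OF w] B eq by simp
    moreover have "X \<inter> B = {}" using B(1) by blast
    ultimately show "\<exists>B. basis M B \<and> X \<inter> B = {}" by blast
  qed
  then show ?thesis unfolding dual_def by auto
qed

lemma rkf_dual: assumes w: "wf_matroid M" shows "rkf (gnd M) (drk M)"
proof
  let ?E = "gnd M"
  show "finite ?E" using wfD(1)[OF w] .
  show "drk M {} = 0" unfolding drk_def by simp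
next
  fix X e assume X: "X \<subseteq> gnd M" and e: "e \<in> gnd M"
  have a: "drk M (insert e X) + rank M (gnd M) = card (insert e X) + rank M (gnd M - insert e X)"
    by (rule drk_eq[OF w]) (use X e in blast)
  have b: "drk M X + rank M (gnd M) = card X + rank M (gnd M - X)" by (rule drk_eq[OF w X])
  have c: "rank M (gnd M - insert e X) \<le> rank M (gnd M - X)" by (rule rank_mono[OF w]) blast
  have fX: "finite X" using X wfD(1)[OF w] finite_subset by blast
  have d: "card (insert e X) \<le> Suc (card X)" using fX by (simp add: card_insert_if)
  show "drk M (insert e X) \<le> Suc (drk M X)" using a b c d by linarith
next
  fix X Y assume XY: "X \<subseteq> Y" and Y: "Y \<subseteq> gnd M"
  have a: "drk M Y + rank M (gnd M) = card Y + rank M (gnd M - Y)" by (rule drk_eq[OF w Y])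
  have b: "drk M X + rank M (gnd M) = card X + rank M (gnd M - X)" by (rule drk_eq[OF w]) (use XY Y in blast)
  have fY: "finite Y" using Y wfD(1)[OF w] finite_subset by blast
  have fd: "finite (Y - X)" using fY by simp
  have "rank M (gnd M - X) \<le> rank M ((gnd M - X) - (Y - X)) + card (Y - X)" by (rule rank_diff_ge[OF w fd])
  moreover have "(gnd M - X) - (Y - X) = gnd M - Y" using XY by blast
  moreover have "card Y = card X + card (Y - X)"
  proof -
    have fX: "finite X" using fY XY finite_subset by blast
    have "card (Y - X) = card Y - card X" by (rule card_Diff_subset[OF fX XY])
    moreover have "card X \<le> card Y" by (rule card_mono[OF fY XY])
    ultimately show ?thesis by linarith
  qed
  ultimately show "drk M X \<le> drk M Y" using a b by simp
next
  fix X Y assume X: "X \<subseteq> gnd M" and Y: "Y \<subseteq> gnd M"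
  have a: "drk M (X \<union> Y) + rank M (gnd M) = card (X \<union> Y) + rank M (gnd M - (X \<union> Y))" by (rule drk_eq[OF w]) (use X Y in blast)
  have b: "drk M (X \<inter> Y) + rank M (gnd M) = card (X \<inter> Y) + rank M (gnd M - (X \<inter> Y))" by (rule drk_eq[OF w]) (use X Y in blast)
  have c: "drk M X + rank M (gnd M) = card X + rank M (gnd M - X)" by (rule drk_eq[OF w X])
  have d: "drk M Y + rank M (gnd M) = card Y + rank M (gnd M - Y)" by (rule drk_eq[OF w Y])
  have fX: "finite X" using X wfD(1)[OF w] finite_subset by blast
  have fY: "finite Y" using Y wfD(1)[OF w] finite_subset by blast
  have e: "card (X \<union> Y) + card (X \<inter> Y) = card X + card Y" by (rule card_Un_Int[OF fX fY, symmetric])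
  have f: "rank M ((gnd M - X) \<union> (gnd M - Y)) + rank M ((gnd M - X) \<inter> (gnd M - Y)) \<le> rank M (gnd M - X) + rank M (gnd M - Y)"
    by (rule rank_submod[OF w])
  have g: "(gnd M - X) \<union> (gnd M - Y) = gnd M - (X \<inter> Y)" "(gnd M - X) \<inter> (gnd M - Y) = gnd M - (X \<union> Y)" by blast+
  show "drk M (X \<union> Y) + drk M (X \<inter> Y) \<le> drk M X + drk M Y" using a b c d e f g by simp
qed

lemma wf_dual: assumes w: "wf_matroid M" shows "wf_matroid (dual M)"
  using rkf.wf[OF rkf_dual[OF w]] dual_alt[OF w] by simp

lemma gnd_dual[simp]: "gnd (dual M) = gnd M" unfolding dual_def by simp

lemma rank_dual: assumes w: "wf_matroid M" and X: "X \<subseteq> gnd M"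
  shows "rank (dual M) X + rank M (gnd M) = card X + rank M (gnd M - X)"
  using rkf.rank_eq[OF rkf_dual[OF w] X] dual_alt[OF w] drk_eq[OF w X] by simp

lemma dual_indep: assumes w: "wf_matroid M"
  shows "X \<in> indeps (dual M) \<longleftrightarrow> X \<subseteq> gnd M \<and> rank M (gnd M - X) = rank M (gnd M)"
proof -
  have "X \<in> indeps (dual M) \<longleftrightarrow> X \<subseteq> gnd M \<and> drk M X = card X" using dual_alt[OF w] by (metis (mono_tags, lifting) matroid.sel(2) mem_Collect_eq)
  moreover have "drk M X = card X \<longleftrightarrow> rank M (gnd M - X) = rank M (gnd M)" if "X \<subseteq> gnd M"
    using drk_eq[OF w that] rank_mono[OF w, of "gnd M - X" "gnd M"] by auto
  ultimately show ?thesis by blast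
qed

section \<open>Contraction\<close>

definition crk :: "'a matroid \<Rightarrow> 'a set \<Rightarrow> 'a set \<Rightarrow> nat" where
  "crk N F X = rank N (X \<union> F) - rank N F"

lemma rkf_contract: assumes w: "wf_matroid N" shows "rkf (gnd N - F) (crk N F)"
proof
  show "finite (gnd N - F)" using wfD(1)[OF w] by simp
  show "crk N F {} = 0" unfolding crk_def by simp
next
  fix X e
  have "rank N (insert e (X \<union> F)) \<le> Suc (rank N (X \<union> F))" by (rule rank_insert_le[OF w])
  moreover have "rank N F \<le> rank N (X \<union> F)" by (rule rank_mono[OF w]) blast
  ultimately show "crk N F (insert e X) \<le> Suc (crk N F X)" unfolding crk_def by simp
next
  fix X Y :: "'a set" assume "X \<subseteq> Y"
  then have "rank N (X \<union> F) \<le> rank N (Y \<union> F)" by (intro rank_mono[OF w]) blast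
  then show "crk N F X \<le> crk N F Y" unfolding crk_def by simp
next
  fix X Y :: "'a set"
  have "rank N ((X \<union> F) \<union> (Y \<union> F)) + rank N ((X \<union> F) \<inter> (Y \<union> F)) \<le> rank N (X \<union> F) + rank N (Y \<union> F)"
    by (rule rank_submod[OF w])
  moreover have "(X \<union> F) \<union> (Y \<union> F) = (X \<union> Y) \<union> F" "(X \<union> F) \<inter> (Y \<union> F) = (X \<inter> Y) \<union> F" by blast+
  moreover have "rank N F \<le> rank N ((X \<inter> Y) \<union> F)" "rank N F \<le> rank N ((X \<union> Y) \<union> F)"
    "rank N F \<le> rank N (X \<union> F)" "rank N F \<le> rank N (Y \<union> F)" by (rule rank_mono[OF w], blast)+
  ultimately show "crk N F (X \<union> Y) + crk N F (X \<inter> Y) \<le> crk N F X + crk N F Y" unfolding crk_def by simp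
qed

lemma contract_alt: assumes w: "wf_matroid N"
  shows "contract N F = Matroid (gnd N - F) {I. I \<subseteq> gnd N - F \<and> crk N F I = card I}"
proof -
  have "rank N (I \<union> F) = card I + rank N F \<longleftrightarrow> crk N F I = card I" for I
    using rank_mono[OF w, of F "I \<union> F"] unfolding crk_def by auto
  then show ?thesis unfolding contract_def by simp
qed

lemma wf_contract: assumes w: "wf_matroid N" shows "wf_matroid (contract N F)"
  using rkf.wf[OF rkf_contract[OF w]] contract_alt[OF w] by simp

lemma gnd_contract[simp]: "gnd (contract N F) = gnd N - F" unfolding contract_def by simp

lemma rank_contract: assumes w: "wf_matroid N" and X: "X \<subseteq> gnd N - F"
  shows "rank (contract N F) X + rank N F = rank N (X \<union> F)"
proof -
  have "rank (contract N F) X = crk N F X" using rkf.rank_eq[OF rkf_contract[OF w] X] contract_alt[OF w] by simp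
  moreover have "rank N F \<le> rank N (X \<union> F)" by (rule rank_mono[OF w]) blast
  ultimately show ?thesis unfolding crk_def by simp
qed

section \<open>Restriction and deletion\<close>

definition restr :: "'a matroid \<Rightarrow> 'a set \<Rightarrow> 'a matroid" where
  "restr N Z = Matroid Z {I \<in> indeps N. I \<subseteq> Z}"

lemma wf_restr: assumes w: "wf_matroid N" and Z: "Z \<subseteq> gnd N" shows "wf_matroid (restr N Z)"
  unfolding wf_matroid_def restr_def matroid.sel
proof (intro conjI allI impI)
  show "finite Z" using Z wfD(1)[OF w] finite_subset by blast
  show "{} \<in> {I \<in> indeps N. I \<subseteq> Z}" using wfD(3)[OF w] by simp
  show "{I \<in> indeps N. I \<subseteq> Z} \<subseteq> Pow Z" by auto
next
  fix X Y assume h: "X \<in> {I \<in> indeps N. I \<subseteq> Z} \<and> Y \<subseteq> X"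
  then have "X \<in> indeps N" "Y \<subseteq> X" "X \<subseteq> Z" by auto
  then show "Y \<in> {I \<in> indeps N. I \<subseteq> Z}" using wfD(4)[OF w] by auto
next
  fix X Y assume h: "X \<in> {I \<in> indeps N. I \<subseteq> Z} \<and> Y \<in> {I \<in> indeps N. I \<subseteq> Z} \<and> card X < card Y"
  then have X: "X \<in> indeps N" "X \<subseteq> Z" and Y: "Y \<in> indeps N" "Y \<subseteq> Z" and lt: "card X < card Y" by auto
  obtain e where "e \<in> Y - X" "insert e X \<in> indeps N" using wfD(5)[OF w X(1) Y(1) lt] by blast
  then show "\<exists>e\<in>Y - X. insert e X \<in> {I \<in> indeps N. I \<subseteq> Z}" using X Y by auto
qed

lemma gnd_restr[simp]: "gnd (restr N Z) = Z" unfolding restr_def by simp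
lemma indeps_restr: "indeps (restr N Z) = {I \<in> indeps N. I \<subseteq> Z}" unfolding restr_def by simp

lemma rank_restr: assumes "X \<subseteq> Z" shows "rank (restr N Z) X = rank N X"
proof -
  have "{Y. Y \<subseteq> X \<and> Y \<in> indeps (restr N Z)} = {Y. Y \<subseteq> X \<and> Y \<in> indeps N}"
    using assms unfolding indeps_restr by blast
  then show ?thesis unfolding rank_def by simp
qed

lemma circuit_restr_iff: assumes w: "wf_matroid N" and Z: "Z \<subseteq> gnd N" and C: "C \<subseteq> Z"
  shows "circuit (restr N Z) C \<longleftrightarrow> circuit N C"
  unfolding circuit_def indeps_restr using C Z by auto

lemma delete_restr: assumes w: "wf_matroid N" shows "delete N e = restr N (gnd N - {e})"
  unfolding delete_def restr_def using indep_sub[OF w] by auto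

lemma series_minor_trans: "series_minor N M' \<Longrightarrow> series_minor M' M \<Longrightarrow> series_minor N M"
  by (induction N M' rule: series_minor.induct) (auto intro: series_minor.intros)

lemma series_minor_restr: assumes w: "wf_matroid N" and Z: "Z \<subseteq> gnd N"
  shows "series_minor (restr N Z) N"
proof -
  have gen: "finite S \<Longrightarrow> S \<subseteq> gnd N \<Longrightarrow> series_minor (Matroid (gnd N - S) {I \<in> indeps N. I \<inter> S = {}}) N" for S
  proof (induction S rule: finite_induct)
    case empty
    have "Matroid (gnd N - {}) {I \<in> indeps N. I \<inter> {} = {}} = N" by (cases N) simp
    then show ?case using series_minor.refl by metis
  next
    case (insert e S)
    then have IH: "series_minor (Matroid (gnd N - S) {I \<in> indeps N. I \<inter> S = {}}) N" by auto
    have e: "e \<in> gnd (Matroid (gnd N - S) {I \<in> indeps N. I \<inter> S = {}})" using insert by auto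
    have "delete (Matroid (gnd N - S) {I \<in> indeps N. I \<inter> S = {}}) e
       = Matroid (gnd N - insert e S) {I \<in> indeps N. I \<inter> insert e S = {}}"
      unfolding delete_def by auto
    then show ?case using series_minor.del[OF IH e] by simp
  qed
  have fin: "finite (gnd N - Z)" using wfD(1)[OF w] by simp
  have "Matroid (gnd N - (gnd N - Z)) {I \<in> indeps N. I \<inter> (gnd N - Z) = {}} = restr N Z"
    unfolding restr_def using Z indep_sub[OF w] by auto
  then show ?thesis using gen[OF fin] by auto
qed




lemma card_split: assumes "finite G" "A \<subseteq> G" shows "card (G - A) + card A = card G"
proof -
  have "finite A" using assms finite_subset by blast
  then have "card (G - A) = card G - card A" using assms(2) by (rule card_Diff_subset)
  moreover have "card A \<le> card G" by (rule card_mono[OF assms])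
  ultimately show ?thesis by linarith
qed

lemma conn_iff_sep: assumes w: "wf_matroid N"
  shows "connected_matroid N \<longleftrightarrow>
    (\<forall>A. A \<subseteq> gnd N \<longrightarrow> rank N A + rank N (gnd N - A) = rank N (gnd N) \<longrightarrow> A = {} \<or> A = gnd N)"
proof
  assume conn: "connected_matroid N"
  show "\<forall>A. A \<subseteq> gnd N \<longrightarrow> rank N A + rank N (gnd N - A) = rank N (gnd N) \<longrightarrow> A = {} \<or> A = gnd N"
  proof (intro allI impI)
    fix A assume A: "A \<subseteq> gnd N" and s: "rank N A + rank N (gnd N - A) = rank N (gnd N)"
    show "A = {} \<or> A = gnd N"
    proof (rule ccontr)
      assume "\<not> (A = {} \<or> A = gnd N)"
      then obtain x y where x: "x \<in> A" and y: "y \<in> gnd N" "y \<notin> A" using A by blast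
      have "x \<noteq> y" "x \<in> gnd N" using x y A by blast+
      then obtain C where C: "circuit N C" "x \<in> C" "y \<in> C" using conn y unfolding connected_matroid_def by blast
      have d: "A \<inter> (gnd N - A) = {}" by blast
      have u: "A \<union> (gnd N - A) = gnd N" using A by blast
      have s': "rank N A + rank N (gnd N - A) = rank N (A \<union> (gnd N - A))" using s u by simp
      have "C \<subseteq> A \<union> (gnd N - A)" using circuit_props(1)[OF w C(1)] u by simp
      then have "C \<subseteq> A \<or> C \<subseteq> gnd N - A" using no_cross[OF w d s' C(1)] by blast
      then show False using C x y by blast
    qed
  qed
next
  assume sf: "\<forall>A. A \<subseteq> gnd N \<longrightarrow> rank N A + rank N (gnd N - A) = rank N (gnd N) \<longrightarrow> A = {} \<or> A = gnd N"
  show "connected_matroid N" unfolding connected_matroid_def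
  proof (intro ballI impI)
    fix x y assume x: "x \<in> gnd N" and y: "y \<in> gnd N" and xy: "x \<noteq> y"
    show "\<exists>C. circuit N C \<and> x \<in> C \<and> y \<in> C"
    proof (rule ccontr)
      assume ncc: "\<not> ?thesis"
      define K where "K = insert x {z. \<exists>C. circuit N C \<and> x \<in> C \<and> z \<in> C}"
      have closed: "C \<subseteq> K" if C: "circuit N C" "C \<inter> K \<noteq> {}" for C
      proof
        fix u assume u: "u \<in> C"
        obtain z where z: "z \<in> C" "z \<in> K" using C(2) by blast
        show "u \<in> K"
        proof (cases "z = x")
          case True
          then show ?thesis using C(1) z u unfolding K_def by blast
        next
          case False
          then obtain C' where C': "circuit N C'" "x \<in> C'" "z \<in> C'" using z unfolding K_def by blast
          have "C' \<inter> C \<noteq> {}" using C' z by blast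
          then obtain C'' where "circuit N C''" "x \<in> C''" "u \<in> C''"
            using trans_circ[OF w C'(1) C(1) _ C'(2) u] by blast
          then show ?thesis unfolding K_def by blast
        qed
      qed
      have KE: "K \<subseteq> gnd N" unfolding K_def using x circuit_props(1)[OF w] by blast
      have "rank N (K \<union> (gnd N - K)) = rank N K + rank N (gnd N - K)"
      proof (rule sep_rank[OF w])
        show "K \<inter> (gnd N - K) = {}" by blast
      next
        fix C assume C: "circuit N C" "C \<subseteq> K \<union> (gnd N - K)"
        show "C \<subseteq> K \<or> C \<subseteq> gnd N - K"
        proof (cases "C \<inter> K = {}")
          case True then show ?thesis using C(2) by blast
        next
          case False then show ?thesis using closed[OF C(1)] by blast
        qed
      qed
      moreover have "K \<union> (gnd N - K) = gnd N" using KE by blast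
      ultimately have "K = {} \<or> K = gnd N" using sf KE by simp
      moreover have "x \<in> K" unfolding K_def by blast
      moreover have "y \<notin> K" unfolding K_def using ncc xy by blast
      ultimately show False using y by blast
    qed
  qed
qed

definition cyc :: "'a matroid \<Rightarrow> 'a set \<Rightarrow> bool" where
  "cyc M G \<longleftrightarrow> (\<forall>e\<in>G. rank M (G - {e}) = rank M G)"

definition nosep :: "'a matroid \<Rightarrow> 'a set \<Rightarrow> bool" where
  "nosep M G \<longleftrightarrow> (\<forall>A. A \<subseteq> G \<longrightarrow> rank M A + rank M (G - A) = rank M G \<longrightarrow> A = {} \<or> A = G)"

lemma cyc_circuit: assumes w: "wf_matroid M" and G: "G \<subseteq> gnd M" and c: "cyc M G" and a: "a \<in> G"
  shows "\<exists>C. circuit M C \<and> a \<in> C \<and> C \<subseteq> G"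
proof -
  have "rank M (insert a (G - {a})) = rank M (G - {a})" using c a unfolding cyc_def by (simp add: insert_absorb)
  then obtain C where "circuit M C" "a \<in> C" "C \<subseteq> insert a (G - {a})"
    using cl_circuit[OF w, of "G - {a}" a] G a by blast
  then show ?thesis using a by blast
qed

lemma noskew_iff: assumes w: "wf_matroid M"
  shows "\<not> has_skew_circuits M \<longleftrightarrow> (\<forall>G. G \<subseteq> gnd M \<longrightarrow> cyc M G \<longrightarrow> nosep M G)"
proof
  assume ns: "\<not> has_skew_circuits M"
  show "\<forall>G. G \<subseteq> gnd M \<longrightarrow> cyc M G \<longrightarrow> nosep M G"
  proof (intro allI impI)
    fix G assume G: "G \<subseteq> gnd M" and c: "cyc M G"
    show "nosep M G" unfolding nosep_def
    proof (intro allI impI)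
      fix A assume A: "A \<subseteq> G" and s: "rank M A + rank M (G - A) = rank M G"
      show "A = {} \<or> A = G"
      proof (rule ccontr)
        assume "\<not> (A = {} \<or> A = G)"
        then obtain a b where a: "a \<in> A" and b: "b \<in> G" "b \<notin> A" using A by blast
        have d: "A \<inter> (G - A) = {}" by blast
        have u: "A \<union> (G - A) = G" using A by blast
        have s': "rank M A + rank M (G - A) = rank M (A \<union> (G - A))" using s u by simp
        obtain Ca where Ca: "circuit M Ca" "a \<in> Ca" "Ca \<subseteq> G" using cyc_circuit[OF w G c] a A by blast
        obtain Cb where Cb: "circuit M Cb" "b \<in> Cb" "Cb \<subseteq> G" using cyc_circuit[OF w G c] b by blast
        have "Ca \<subseteq> A \<or> Ca \<subseteq> G - A" using no_cross[OF w d s' Ca(1)] Ca(3) u by simp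
        then have CaA: "Ca \<subseteq> A" using Ca(2) a by blast
        have "Cb \<subseteq> A \<or> Cb \<subseteq> G - A" using no_cross[OF w d s' Cb(1)] Cb(3) u by simp
        then have CbA: "Cb \<subseteq> G - A" using Cb(2) b by blast
        have "rank M Ca + rank M Cb = rank M (Ca \<union> Cb)" by (rule hered[OF w d s' CaA CbA])
        moreover have "Ca \<noteq> Cb" using CbA Ca(2) a by blast
        ultimately have "has_skew_circuits M" unfolding has_skew_circuits_def skew_def using Ca(1) Cb(1) by blast
        then show False using ns by blast
      qed
    qed
  qed
next
  assume h: "\<forall>G. G \<subseteq> gnd M \<longrightarrow> cyc M G \<longrightarrow> nosep M G"
  show "\<not> has_skew_circuits M"
  proof
    assume "has_skew_circuits M"
    then obtain C1 C2 where c1: "circuit M C1" and c2: "circuit M C2" and ne: "C1 \<noteq> C2" and sk: "skew M C1 C2"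
      unfolding has_skew_circuits_def by blast
    have disj: "C1 \<inter> C2 = {}" by (rule skew_disjoint[OF w c1 c2 ne sk])
    define G where "G = C1 \<union> C2"
    have GE: "G \<subseteq> gnd M" unfolding G_def using circuit_props(1)[OF w c1] circuit_props(1)[OF w c2] by blast
    have "cyc M G" unfolding cyc_def
    proof
      fix e assume e: "e \<in> G"
      show "rank M (G - {e}) = rank M G"
      proof (cases "e \<in> C1")
        case True
        have "rank M (insert e (G - {e})) = rank M (G - {e})" by (rule circuit_cl[OF w c1 True]) (auto simp: G_def)
        then show ?thesis using e by (simp add: insert_absorb)
      next
        case False
        then have e2: "e \<in> C2" using e unfolding G_def by blast
        have "rank M (insert e (G - {e})) = rank M (G - {e})" by (rule circuit_cl[OF w c2 e2]) (auto simp: G_def)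
        then show ?thesis using e by (simp add: insert_absorb)
      qed
    qed
    then have ns: "nosep M G" using h GE by blast
    have "G - C1 = C2" unfolding G_def using disj by blast
    then have "rank M C1 + rank M (G - C1) = rank M G" using sk unfolding skew_def G_def by simp
    then have "C1 = {} \<or> C1 = G" using ns unfolding nosep_def G_def by blast
    moreover have "C1 \<noteq> {}" using circuit_props(4)[OF w c1] .
    moreover have "C2 \<noteq> {}" using circuit_props(4)[OF w c2] .
    ultimately show False using disj unfolding G_def by blast
  qed
qed

lemma flat_dual: assumes w: "wf_matroid M"
  shows "flat (dual M) F \<longleftrightarrow> F \<subseteq> gnd M \<and> cyc M (gnd M - F)"
proof -
  have key: "rank (dual M) F < rank (dual M) (insert e F) \<longleftrightarrow> rank M ((gnd M - F) - {e}) = rank M (gnd M - F)"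
    if F: "F \<subseteq> gnd M" and e: "e \<in> gnd M - F" for e
  proof -
    have a: "rank (dual M) (insert e F) + rank M (gnd M) = card (insert e F) + rank M (gnd M - insert e F)"
      by (rule rank_dual[OF w]) (use F e in blast)
    have b: "rank (dual M) F + rank M (gnd M) = card F + rank M (gnd M - F)" by (rule rank_dual[OF w F])
    have fF: "finite F" using F wfD(1)[OF w] finite_subset by blast
    have c: "card (insert e F) = Suc (card F)" using e fF by simp
    have d: "gnd M - insert e F = (gnd M - F) - {e}" by blast
    have m: "rank M ((gnd M - F) - {e}) \<le> rank M (gnd M - F)" by (rule rank_mono[OF w]) blast
    have u: "rank M (gnd M - F) \<le> Suc (rank M ((gnd M - F) - {e}))"
      using rank_insert_le[OF w, of e "(gnd M - F) - {e}"] e by (simp add: insert_absorb)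
    have a': "rank (dual M) (insert e F) + rank M (gnd M) = Suc (card F) + rank M ((gnd M - F) - {e})"
      using a c d by simp
    show ?thesis using a' b m u by (intro iffI) linarith+
  qed
  show ?thesis unfolding flat_def cyc_def gnd_dual
  proof
    assume h: "F \<subseteq> gnd M \<and> (\<forall>e\<in>gnd M - F. rank (dual M) F < rank (dual M) (insert e F))"
    then show "F \<subseteq> gnd M \<and> (\<forall>e\<in>gnd M - F. rank M (gnd M - F - {e}) = rank M (gnd M - F))"
      using key by blast
  next
    assume h: "F \<subseteq> gnd M \<and> (\<forall>e\<in>gnd M - F. rank M (gnd M - F - {e}) = rank M (gnd M - F))"
    then show "F \<subseteq> gnd M \<and> (\<forall>e\<in>gnd M - F. rank (dual M) F < rank (dual M) (insert e F))"
      using key by blast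
  qed
qed

lemma conn_dual: assumes w: "wf_matroid M"
  shows "connected_matroid (dual M) \<longleftrightarrow> connected_matroid M"
proof -
  have "rank (dual M) A + rank (dual M) (gnd M - A) = rank (dual M) (gnd M) \<longleftrightarrow>
        rank M A + rank M (gnd M - A) = rank M (gnd M)" if A: "A \<subseteq> gnd M" for A
  proof -
    have a: "rank (dual M) A + rank M (gnd M) = card A + rank M (gnd M - A)" by (rule rank_dual[OF w A])
    have b: "rank (dual M) (gnd M - A) + rank M (gnd M) = card (gnd M - A) + rank M (gnd M - (gnd M - A))"
      by (rule rank_dual[OF w]) blast
    have c: "rank (dual M) (gnd M) + rank M (gnd M) = card (gnd M) + rank M (gnd M - gnd M)"
      by (rule rank_dual[OF w]) blast
    have d: "gnd M - (gnd M - A) = A" using A by blast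
    have e: "card (gnd M - A) + card A = card (gnd M)" by (rule card_split[OF wfD(1)[OF w] A])
    have f: "rank M (gnd M - gnd M) = 0" using rank_empty[OF w] by simp
    have b': "rank (dual M) (gnd M - A) + rank M (gnd M) = card (gnd M - A) + rank M A" using b d by simp
    have c': "rank (dual M) (gnd M) + rank M (gnd M) = card (gnd M)" using c f by simp
    show ?thesis using a b' c' e by (intro iffI) linarith+
  qed
  then show ?thesis using conn_iff_sep[OF w] conn_iff_sep[OF wf_dual[OF w]] by (simp add: gnd_dual)
qed

lemma conn_contract_dual: assumes w: "wf_matroid M" and F: "F \<subseteq> gnd M"
  shows "connected_matroid (contract (dual M) F) \<longleftrightarrow> nosep M (gnd M - F)"
proof -
  define G where "G = gnd M - F"
  have wc: "wf_matroid (contract (dual M) F)" by (rule wf_contract[OF wf_dual[OF w]])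
  have gc: "gnd (contract (dual M) F) = G" unfolding G_def by simp
  have fE: "finite (gnd M)" using wfD(1)[OF w] .
  have rc: "rank (contract (dual M) F) X + rank (dual M) F + rank M (gnd M) = card X + card F + rank M (G - X)"
    if X: "X \<subseteq> G" for X
  proof -
    have a: "rank (contract (dual M) F) X + rank (dual M) F = rank (dual M) (X \<union> F)"
      by (rule rank_contract[OF wf_dual[OF w]]) (use X in \<open>simp add: G_def\<close>)
    have b: "rank (dual M) (X \<union> F) + rank M (gnd M) = card (X \<union> F) + rank M (gnd M - (X \<union> F))"
      by (rule rank_dual[OF w]) (use X F in \<open>auto simp: G_def\<close>)
    have fX: "finite X" using finite_subset[of X "gnd M"] X fE unfolding G_def by blast
    have fF: "finite F" using finite_subset[of F "gnd M"] F fE by blast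
    have dj: "X \<inter> F = {}" using X unfolding G_def by blast
    have c: "card (X \<union> F) = card X + card F" by (rule card_Un_disjoint[OF fX fF dj])
    have d: "gnd M - (X \<union> F) = G - X" unfolding G_def by blast
    show ?thesis using a b c d by simp
  qed
  have rF: "rank (dual M) F + rank M (gnd M) = card F + rank M G"
    using rank_dual[OF w F] unfolding G_def .
  have eq: "rank (contract (dual M) F) A + rank (contract (dual M) F) (G - A) = rank (contract (dual M) F) G
     \<longleftrightarrow> rank M A + rank M (G - A) = rank M G" if A: "A \<subseteq> G" for A
  proof -
    have a: "rank (contract (dual M) F) A + rank (dual M) F + rank M (gnd M) = card A + card F + rank M (G - A)"
      by (rule rc[OF A])
    have b: "rank (contract (dual M) F) (G - A) + rank (dual M) F + rank M (gnd M) = card (G - A) + card F + rank M (G - (G - A))"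
      by (rule rc) blast
    have c: "rank (contract (dual M) F) G + rank (dual M) F + rank M (gnd M) = card G + card F + rank M (G - G)"
      by (rule rc) blast
    have d: "G - (G - A) = A" using A by blast
    have fG: "finite G" unfolding G_def using fE by simp
    have e: "card (G - A) + card A = card G" by (rule card_split[OF fG A])
    have f: "rank M (G - G) = 0" using rank_empty[OF w] by simp
    have b': "rank (contract (dual M) F) (G - A) + rank (dual M) F + rank M (gnd M) = card (G - A) + card F + rank M A"
      using b d by simp
    have c': "rank (contract (dual M) F) G + rank (dual M) F + rank M (gnd M) = card G + card F" using c f by simp
    show ?thesis using a b' c' e rF by (intro iffI) linarith+
  qed
  show ?thesis unfolding conn_iff_sep[OF wc] gc nosep_def G_def[symmetric]
  proof (intro iffI allI impI)
    fix A assume h: "\<forall>A. A \<subseteq> G \<longrightarrow> rank (contract (dual M) F) A + rank (contract (dual M) F) (G - A) =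
         rank (contract (dual M) F) G \<longrightarrow> A = {} \<or> A = G"
      and A: "A \<subseteq> G" and s: "rank M A + rank M (G - A) = rank M G"
    have "rank (contract (dual M) F) A + rank (contract (dual M) F) (G - A) = rank (contract (dual M) F) G"
      using eq[OF A] s by blast
    then show "A = {} \<or> A = G" using h A by blast
  next
    fix A assume h: "\<forall>A. A \<subseteq> G \<longrightarrow> rank M A + rank M (G - A) = rank M G \<longrightarrow> A = {} \<or> A = G"
      and A: "A \<subseteq> G" and s: "rank (contract (dual M) F) A + rank (contract (dual M) F) (G - A) = rank (contract (dual M) F) G"
    have "rank M A + rank M (G - A) = rank M G" using eq[OF A] s by blast
    then show "A = {} \<or> A = G" using h A by blast
  qed
qed

lemma unbreak_iff: assumes w: "wf_matroid M" and conn: "connected_matroid M"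
  shows "unbreakable (dual M) \<longleftrightarrow> (\<forall>G. G \<subseteq> gnd M \<longrightarrow> cyc M G \<longrightarrow> nosep M G)"
proof
  assume u: "unbreakable (dual M)"
  show "\<forall>G. G \<subseteq> gnd M \<longrightarrow> cyc M G \<longrightarrow> nosep M G"
  proof (intro allI impI)
    fix G assume G: "G \<subseteq> gnd M" and c: "cyc M G"
    define F where "F = gnd M - G"
    have F: "F \<subseteq> gnd M" unfolding F_def by blast
    have GF: "gnd M - F = G" unfolding F_def using G by blast
    have "flat (dual M) F" using flat_dual[OF w] F c GF by simp
    then have "connected_matroid (contract (dual M) F)" using u unfolding unbreakable_def by blast
    then show "nosep M G" using conn_contract_dual[OF w F] GF by simp
  qed
next
  assume h: "\<forall>G. G \<subseteq> gnd M \<longrightarrow> cyc M G \<longrightarrow> nosep M G"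
  show "unbreakable (dual M)" unfolding unbreakable_def
  proof (intro conjI allI impI)
    show "connected_matroid (dual M)" using conn_dual[OF w] conn by simp
    fix F assume f: "flat (dual M) F"
    then have F: "F \<subseteq> gnd M" and c: "cyc M (gnd M - F)" using flat_dual[OF w] by blast+
    have "nosep M (gnd M - F)" using h c by blast
    then show "connected_matroid (contract (dual M) F)" using conn_contract_dual[OF w F] by simp
  qed
qed




section \<open>Series pairs\<close>

lemma cocircuitD: assumes w: "wf_matroid N" and c: "cocircuit N {f, g}"
  shows "f \<in> gnd N" "g \<in> gnd N" "rank N (gnd N - {f, g}) \<noteq> rank N (gnd N)"
    "f \<noteq> g \<Longrightarrow> rank N (gnd N - {f}) = rank N (gnd N)"
    "f \<noteq> g \<Longrightarrow> rank N (gnd N - {g}) = rank N (gnd N)"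
proof -
  have c': "circuit (dual N) {f, g}" using c unfolding cocircuit_def .
  show "f \<in> gnd N" "g \<in> gnd N" using circuit_props(1)[OF wf_dual[OF w] c'] by auto
  have "{f, g} \<notin> indeps (dual N)" using circuit_props(2)[OF wf_dual[OF w] c'] .
  then show "rank N (gnd N - {f, g}) \<noteq> rank N (gnd N)"
    using dual_indep[OF w] \<open>f \<in> gnd N\<close> \<open>g \<in> gnd N\<close> by blast
  assume fg: "f \<noteq> g"
  have "{f, g} - {g} \<in> indeps (dual N)" by (rule circuit_props(5)[OF wf_dual[OF w] c']) simp
  moreover have "{f, g} - {g} = {f}" using fg by blast
  ultimately show "rank N (gnd N - {f}) = rank N (gnd N)" using dual_indep[OF w] by simp
  have "{f, g} - {f} \<in> indeps (dual N)" by (rule circuit_props(5)[OF wf_dual[OF w] c']) simp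
  moreover have "{f, g} - {f} = {g}" using fg by blast
  ultimately show "rank N (gnd N - {g}) = rank N (gnd N)" using dual_indep[OF w] by simp
qed

lemma cocircuitI2: assumes w: "wf_matroid N" and fg: "f \<in> gnd N" "g \<in> gnd N" "f \<noteq> g"
  and r: "rank N (gnd N - {f, g}) \<noteq> rank N (gnd N)"
  and rf: "rank N (gnd N - {f}) = rank N (gnd N)" and rg: "rank N (gnd N - {g}) = rank N (gnd N)"
  shows "cocircuit N {f, g}"
  unfolding cocircuit_def
proof (rule circuitI[OF wf_dual[OF w]])
  show "{f, g} \<subseteq> gnd (dual N)" using fg by simp
  show "{f, g} \<notin> indeps (dual N)" using dual_indep[OF w] r by blast
  show "\<forall>x\<in>{f, g}. {f, g} - {x} \<in> indeps (dual N)"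
  proof
    fix x assume "x \<in> {f, g}"
    then have "({f, g} - {x} = {g} \<and> x = f) \<or> ({f, g} - {x} = {f} \<and> x = g)" using fg(3) by blast
    then show "{f, g} - {x} \<in> indeps (dual N)" using dual_indep[OF w] fg rf rg by auto
  qed
qed

lemma series_cl: assumes w: "wf_matroid N" and c: "cocircuit N {f, g}"
  and X: "X \<subseteq> gnd N - {f}" and r: "rank N (insert f X) = rank N X"
  shows "g \<in> X \<and> g \<noteq> f"
proof (rule ccontr)
  assume n: "\<not> (g \<in> X \<and> g \<noteq> f)"
  then have X2: "X \<subseteq> gnd N - {f, g}" using X by blast
  have a: "rank N (insert f (gnd N - {f, g})) = rank N (gnd N - {f, g})" by (rule cl_mono[OF w r X2])
  show False
  proof (cases "f = g")
    case True
    have "insert f (gnd N - {f, g}) = gnd N" using cocircuitD(1)[OF w c] True by blast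
    then show False using a cocircuitD(3)[OF w c] by simp
  next
    case False
    have "insert f (gnd N - {f, g}) = gnd N - {g}" using cocircuitD(1)[OF w c] False by blast
    then show False using a cocircuitD(3)[OF w c] cocircuitD(5)[OF w c False] by simp
  qed
qed

lemma series_nonloop: assumes w: "wf_matroid N" and c: "cocircuit N {f, g}"
  shows "rank N {f} = 1"
proof -
  have "rank N {f} \<le> Suc (rank N {})" using rank_insert_le[OF w, of f "{}"] by simp
  moreover have "rank N {f} \<noteq> 0"
  proof
    assume "rank N {f} = 0"
    then have "rank N (insert f {}) = rank N {}" using rank_empty[OF w] by simp
    then show False using series_cl[OF w c, of "{}"] by simp
  qed
  ultimately show ?thesis using rank_empty[OF w] by simp
qed

lemma rank_sc: assumes w: "wf_matroid N" and c: "cocircuit N {f, g}" and X: "X \<subseteq> gnd N - {f}"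
  shows "rank (contract N {f}) X + 1 = rank N (insert f X)"
  using rank_contract[OF w, of X "{f}"] X series_nonloop[OF w c] by simp

lemma series_notcl: assumes w: "wf_matroid N" and c: "cocircuit N {f, g}"
  and X: "X \<subseteq> gnd N - {f}" and g: "g \<notin> X"
  shows "rank N (insert f X) = Suc (rank N X)"
proof -
  have "rank N (insert f X) \<noteq> rank N X" using series_cl[OF w c X] g by blast
  moreover have "rank N X \<le> rank N (insert f X)" by (rule rank_mono[OF w]) blast
  moreover have "rank N (insert f X) \<le> Suc (rank N X)" by (rule rank_insert_le[OF w])
  ultimately show ?thesis by linarith
qed

lemma circ_sc_keep: assumes w: "wf_matroid N" and c: "cocircuit N {f, g}" and C: "circuit N C"
  and f: "f \<notin> C" and g: "g \<notin> C"
  shows "circuit (contract N {f}) C"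
proof -
  have CE: "C \<subseteq> gnd N" using circuit_props(1)[OF w C] .
  have eq: "rank (contract N {f}) Y = rank N Y" if Y: "Y \<subseteq> C" for Y
  proof -
    have Y': "Y \<subseteq> gnd N - {f}" using Y CE f by blast
    have "rank (contract N {f}) Y + 1 = rank N (insert f Y)" by (rule rank_sc[OF w c Y'])
    moreover have "rank N (insert f Y) = Suc (rank N Y)" by (rule series_notcl[OF w c Y']) (use Y g in blast)
    ultimately show ?thesis by simp
  qed
  have wc: "wf_matroid (contract N {f})" by (rule wf_contract[OF w])
  have CE': "C \<subseteq> gnd (contract N {f})" using CE f by auto
  show ?thesis
  proof (rule circuitI[OF wc CE'])
    have "0 < card C" using circuit_props(3,4)[OF w C] card_gt_0_iff by blast
    then have "rank N C \<noteq> card C" using circuit_props(6)[OF w C] by linarith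
    then show "C \<notin> indeps (contract N {f})" using indep_iff_rank[OF wc CE'] eq[of C] by simp
    show "\<forall>x\<in>C. C - {x} \<in> indeps (contract N {f})"
    proof
      fix x assume x: "x \<in> C"
      have i: "C - {x} \<in> indeps N" using circuit_props(5)[OF w C x] .
      have s: "C - {x} \<subseteq> gnd (contract N {f})" using CE' by blast
      show "C - {x} \<in> indeps (contract N {f})"
        using indep_iff_rank[OF wc s] eq[of "C - {x}"] rank_indep[OF w i] by simp
    qed
  qed
qed

lemma circ_sc_shrink: assumes w: "wf_matroid N" and c: "cocircuit N {f, g}" and C: "circuit N C"
  and f: "f \<in> C" and two: "card C \<ge> 3"
  shows "circuit (contract N {f}) (C - {f})"
proof -
  have CE: "C \<subseteq> gnd N" using circuit_props(1)[OF w C] .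
  have fC: "finite C" using circuit_props(3)[OF w C] .
  have wc: "wf_matroid (contract N {f})" by (rule wf_contract[OF w])
  have CE': "C - {f} \<subseteq> gnd (contract N {f})" using CE by auto
  have cd: "card (C - {f}) = card C - 1" using f fC by simp
  show ?thesis
  proof (rule circuitI[OF wc CE'])
    have "rank (contract N {f}) (C - {f}) + 1 = rank N (insert f (C - {f}))" by (rule rank_sc[OF w c]) (use CE in blast)
    moreover have "insert f (C - {f}) = C" using f by blast
    ultimately have "rank (contract N {f}) (C - {f}) + 1 = card C - 1" using circuit_props(6)[OF w C] by simp
    then have "rank (contract N {f}) (C - {f}) \<noteq> card (C - {f})" using cd two by linarith
    then show "C - {f} \<notin> indeps (contract N {f})" using indep_iff_rank[OF wc CE'] by simp
    show "\<forall>x\<in>C - {f}. C - {f} - {x} \<in> indeps (contract N {f})"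
    proof
      fix x assume x: "x \<in> C - {f}"
      have s: "C - {f} - {x} \<subseteq> gnd (contract N {f})" using CE' by blast
      have "rank (contract N {f}) (C - {f} - {x}) + 1 = rank N (insert f (C - {f} - {x}))" by (rule rank_sc[OF w c]) (use CE in blast)
      moreover have "insert f (C - {f} - {x}) = C - {x}" using f x by blast
      moreover have "rank N (C - {x}) = card C - 1"
        using rank_indep[OF w circuit_props(5)[OF w C]] x fC by simp
      moreover have "card (C - {f} - {x}) = card C - 2" using x f fC by (simp add: card_Diff_subset)
      ultimately have "rank (contract N {f}) (C - {f} - {x}) = card (C - {f} - {x})" using two by simp
      then show "C - {f} - {x} \<in> indeps (contract N {f})" using indep_iff_rank[OF wc s] by simp
    qed
  qed
qed

lemma circ_sc_lift: assumes w: "wf_matroid N" and c: "cocircuit N {f, g}" and C: "circuit (contract N {f}) C"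
  shows "(rank N (insert f C) = Suc (rank N C) \<and> circuit N C) \<or>
         (rank N (insert f C) = rank N C \<and> circuit N (insert f C))"
proof -
  have wc: "wf_matroid (contract N {f})" by (rule wf_contract[OF w])
  have CE': "C \<subseteq> gnd N - {f}" using circuit_props(1)[OF wc C] by simp
  have fC: "finite C" using circuit_props(3)[OF wc C] .
  have rc: "rank (contract N {f}) Y + 1 = rank N (insert f Y)" if "Y \<subseteq> C" for Y
    by (rule rank_sc[OF w c]) (use that CE' in blast)
  have r1: "rank (contract N {f}) C = card C - 1" using circuit_props(6)[OF wc C] .
  have r2: "rank (contract N {f}) (C - {x}) = card C - 1" if "x \<in> C" for x
    using circuit_props(6)[OF wc C] circuit_props(7)[OF wc C that] by simp
  have "0 < card C" using circuit_props(3,4)[OF wc C] card_gt_0_iff by blast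
  then have ne: "card C \<ge> 1" by linarith
  show ?thesis
  proof (cases "rank N (insert f C) = rank N C")
    case False
    then have s: "rank N (insert f C) = Suc (rank N C)"
      using rank_mono[OF w subset_insertI[of C f]] rank_insert_le[OF w, of f C] by linarith
    have eq: "rank N Y = rank (contract N {f}) Y" if Y: "Y \<subseteq> C" for Y
    proof -
      have "rank N (insert f Y) \<noteq> rank N Y"
      proof
        assume "rank N (insert f Y) = rank N Y"
        then have "rank N (insert f C) = rank N C" by (rule cl_mono[OF w _ Y])
        then show False using False by simp
      qed
      then have "rank N (insert f Y) = Suc (rank N Y)"
        using rank_mono[OF w subset_insertI[of Y f]] rank_insert_le[OF w, of f Y] by linarith
      then show ?thesis using rc[OF Y] by simp
    qed
    have CE: "C \<subseteq> gnd N" using CE' by blast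
    have "circuit N C"
    proof (rule circuitI[OF w CE])
      show "C \<notin> indeps N" using indep_iff_rank[OF w CE] eq[of C] r1 ne by simp
      show "\<forall>x\<in>C. C - {x} \<in> indeps N"
      proof
        fix x assume x: "x \<in> C"
        have "rank N (C - {x}) = card (C - {x})" using eq[of "C - {x}"] r2[OF x] x fC by simp
        then show "C - {x} \<in> indeps N" using indep_iff_rank[OF w] CE by blast
      qed
    qed
    then show ?thesis using s by blast
  next
    case True
    have fn: "f \<notin> C" using CE' by blast
    have IE: "insert f C \<subseteq> gnd N" using CE' cocircuitD(1)[OF w c] by blast
    have rC: "rank N (insert f C) = card C" using rc[of C] r1 ne by simp
    have "circuit N (insert f C)"
    proof (rule circuitI[OF w IE])
      show "insert f C \<notin> indeps N" using indep_iff_rank[OF w IE] rC fn fC by simp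
      show "\<forall>x\<in>insert f C. insert f C - {x} \<in> indeps N"
      proof
        fix x assume x: "x \<in> insert f C"
        show "insert f C - {x} \<in> indeps N"
        proof (cases "x = f")
          case True
          have "insert f C - {x} = C" using True fn by blast
          moreover have "rank N C = card C" using rC \<open>rank N (insert f C) = rank N C\<close> by simp
          ultimately show ?thesis using indep_iff_rank[OF w] CE' by auto
        next
          case False
          then have xC: "x \<in> C" using x by blast
          have e: "insert f C - {x} = insert f (C - {x})" using False by blast
          have "rank N (insert f (C - {x})) = card C" using rc[of "C - {x}"] r2[OF xC] ne by simp
          moreover have "card (insert f (C - {x})) = card C" using fn xC fC ne by simp
          moreover have "insert f (C - {x}) \<subseteq> gnd N" using IE by blast
          ultimately show ?thesis using indep_iff_rank[OF w] e by metis
        qed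
      qed
    qed
    then show ?thesis using True by blast
  qed
qed

lemma noskew_sc: assumes w: "wf_matroid N" and c: "cocircuit N {f, g}" and ns: "\<not> has_skew_circuits N"
  shows "\<not> has_skew_circuits (contract N {f})"
proof
  assume "has_skew_circuits (contract N {f})"
  then obtain C1 C2 where c1: "circuit (contract N {f}) C1" and c2: "circuit (contract N {f}) C2"
    and ne: "C1 \<noteq> C2" and sk: "skew (contract N {f}) C1 C2" unfolding has_skew_circuits_def by blast
  have wc: "wf_matroid (contract N {f})" by (rule wf_contract[OF w])
  have disj: "C1 \<inter> C2 = {}" by (rule skew_disjoint[OF wc c1 c2 ne sk])
  have E1: "C1 \<subseteq> gnd N - {f}" using circuit_props(1)[OF wc c1] by simp
  have E2: "C2 \<subseteq> gnd N - {f}" using circuit_props(1)[OF wc c2] by simp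
  have ra: "rank (contract N {f}) C1 + 1 = rank N (insert f C1)" by (rule rank_sc[OF w c E1])
  have rb: "rank (contract N {f}) C2 + 1 = rank N (insert f C2)" by (rule rank_sc[OF w c E2])
  have rab: "rank (contract N {f}) (C1 \<union> C2) + 1 = rank N (insert f (C1 \<union> C2))" by (rule rank_sc[OF w c]) (use E1 E2 in blast)
  have skr: "rank (contract N {f}) C1 + rank (contract N {f}) C2 = rank (contract N {f}) (C1 \<union> C2)"
    using sk unfolding skew_def .
  have nb: "\<not> (rank N (insert f C1) = rank N C1 \<and> rank N (insert f C2) = rank N C2)"
  proof
    assume h: "rank N (insert f C1) = rank N C1 \<and> rank N (insert f C2) = rank N C2"
    then have "g \<in> C1" "g \<in> C2" using series_cl[OF w c E1] series_cl[OF w c E2] by blast+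
    then show False using disj by blast
  qed
  have sk_or: "has_skew_circuits N" if "circuit N D1" "circuit N D2" "D1 \<noteq> D2" "rank N D1 + rank N D2 = rank N (D1 \<union> D2)" for D1 D2
    unfolding has_skew_circuits_def skew_def using that by blast
  have m1: "rank N (C1 \<union> C2) \<le> rank N C1 + rank N C2" by (rule rank_union_le[OF w])
  have i1: "rank N (insert f (C1 \<union> C2)) \<le> Suc (rank N (C1 \<union> C2))" by (rule rank_insert_le[OF w])
  have f1: "f \<notin> C1" "f \<notin> C2" using E1 E2 by blast+
  from circ_sc_lift[OF w c c1] circ_sc_lift[OF w c c2] nb
  consider (n) "rank N (insert f C1) = Suc (rank N C1)" "circuit N C1" "rank N (insert f C2) = Suc (rank N C2)" "circuit N C2"
    | (a) "rank N (insert f C1) = rank N C1" "circuit N (insert f C1)" "rank N (insert f C2) = Suc (rank N C2)" "circuit N C2"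
    | (b) "rank N (insert f C1) = Suc (rank N C1)" "circuit N C1" "rank N (insert f C2) = rank N C2" "circuit N (insert f C2)"
    by blast
  then show False
  proof cases
    case n
    have "rank N C1 + rank N C2 = rank N (C1 \<union> C2)" using n ra rb rab skr m1 i1 by linarith
    then show False using sk_or[OF n(2) n(4) ne] ns by blast
  next
    case a
    have u: "insert f C1 \<union> C2 = insert f (C1 \<union> C2)" by blast
    have "rank N (insert f C1) + rank N C2 = rank N (insert f C1 \<union> C2)" using a ra rb rab skr u by simp
    moreover have "insert f C1 \<noteq> C2" using f1 by blast
    ultimately show False using sk_or[OF a(2) a(4)] ns by blast
  next
    case b
    have u: "C1 \<union> insert f C2 = insert f (C1 \<union> C2)" by blast
    have "rank N C1 + rank N (insert f C2) = rank N (C1 \<union> insert f C2)" using b ra rb rab skr u by simp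
    moreover have "C1 \<noteq> insert f C2" using f1 by blast
    ultimately show False using sk_or[OF b(2) b(4)] ns by blast
  qed
qed

lemma noskew_restr: assumes w: "wf_matroid N" and Z: "Z \<subseteq> gnd N" and ns: "\<not> has_skew_circuits N"
  shows "\<not> has_skew_circuits (restr N Z)"
proof
  assume "has_skew_circuits (restr N Z)"
  then obtain C1 C2 where c1: "circuit (restr N Z) C1" and c2: "circuit (restr N Z) C2"
    and ne: "C1 \<noteq> C2" and sk: "skew (restr N Z) C1 C2" unfolding has_skew_circuits_def by blast
  have wr: "wf_matroid (restr N Z)" by (rule wf_restr[OF w Z])
  have s1: "C1 \<subseteq> Z" using circuit_props(1)[OF wr c1] by simp
  have s2: "C2 \<subseteq> Z" using circuit_props(1)[OF wr c2] by simp
  have "circuit N C1" "circuit N C2" using circuit_restr_iff[OF w Z s1] circuit_restr_iff[OF w Z s2] c1 c2 by blast+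
  moreover have "skew N C1 C2" using sk s1 s2 rank_restr[of C1 Z N] rank_restr[of C2 Z N] rank_restr[of "C1 \<union> C2" Z N]
    unfolding skew_def by simp
  ultimately show False using ns ne unfolding has_skew_circuits_def by blast
qed

lemma sm_inv: "series_minor N M \<Longrightarrow> wf_matroid M \<Longrightarrow> \<not> has_skew_circuits M \<Longrightarrow>
   wf_matroid N \<and> \<not> has_skew_circuits N"
proof (induction N M rule: series_minor.induct)
  case (refl M)
  then show ?case by blast
next
  case (del N M e)
  have h: "wf_matroid N \<and> \<not> has_skew_circuits N" by (rule del.IH[OF del.prems])
  then have w: "wf_matroid N" and ns: "\<not> has_skew_circuits N" by blast+
  have d: "delete N e = restr N (gnd N - {e})" by (rule delete_restr[OF w])
  have sub: "gnd N - {e} \<subseteq> gnd N" by blast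
  have a: "wf_matroid (restr N (gnd N - {e}))" by (rule wf_restr[OF w sub])
  have b: "\<not> has_skew_circuits (restr N (gnd N - {e}))" by (rule noskew_restr[OF w sub ns])
  show ?case unfolding d using a b by (rule conjI)
next
  case (scon N M f g)
  have h: "wf_matroid N \<and> \<not> has_skew_circuits N" by (rule scon.IH[OF scon.prems])
  then have w: "wf_matroid N" and ns: "\<not> has_skew_circuits N" by blast+
  have a: "wf_matroid (contract N {f})" by (rule wf_contract[OF w])
  have b: "\<not> has_skew_circuits (contract N {f})" by (rule noskew_sc[OF w scon.hyps(2) ns])
  show ?case using a b by (rule conjI)
qed




section \<open>The matroid SU\<close>

lemma circuit_uniform: assumes "finite S"
  shows "circuit (uniform r S) C \<longleftrightarrow> C \<subseteq> S \<and> card C = Suc r"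
proof
  assume c: "circuit (uniform r S) C"
  then have CS: "C \<subseteq> S" and nd: "\<not> card C \<le> r" and sub: "\<And>D. D \<subset> C \<Longrightarrow> card D \<le> r"
    unfolding circuit_def uniform_def by auto
  have fC: "finite C" using CS assms finite_subset by blast
  have "C \<noteq> {}" using nd by auto
  then obtain x where x: "x \<in> C" by blast
  have "C - {x} \<subset> C" using x by blast
  then have "card (C - {x}) \<le> r" by (rule sub)
  then have "card C \<le> Suc r" using x fC by simp
  then show "C \<subseteq> S \<and> card C = Suc r" using nd CS by simp
next
  assume h: "C \<subseteq> S \<and> card C = Suc r"
  have fC: "finite C" using h assms finite_subset by blast
  show "circuit (uniform r S) C" unfolding circuit_def uniform_def matroid.sel
  proof (intro conjI allI impI)
    show "C \<subseteq> S" using h by blast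
    show "C \<notin> {Y. Y \<subseteq> S \<and> card Y \<le> r}" using h by simp
    fix D assume D: "D \<subset> C"
    have "card D < card C" by (rule psubset_card_mono[OF fC D])
    then show "D \<in> {Y. Y \<subseteq> S \<and> card Y \<le> r}" using D h by auto
  qed
qed

lemma minus_one: assumes "finite S" "C \<subseteq> S" "Suc (card C) = card S"
  shows "\<exists>a\<in>S. C = S - {a}"
proof -
  have fC: "finite C" using assms finite_subset by blast
  have "card (S - C) = card S - card C" by (rule card_Diff_subset[OF fC assms(2)])
  then have "card (S - C) = 1" using assms(3) by simp
  then obtain a where a: "S - C = {a}" by (rule card_1_singletonE)
  then have "a \<in> S" "C = S - {a}" using assms(2) by blast+
  then show ?thesis by blast
qed

lemma gnd_uniform[simp]: "gnd (uniform r S) = S" unfolding uniform_def by simp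

lemma SU_gnd: assumes "3 \<le> k" "3 \<le> l" shows "gnd (SU k l) = {0..<k + l - 1}"
  unfolding SU_def series_connection_def Let_def using assms by auto

lemma SU_circs: assumes k: "3 \<le> k" and l: "3 \<le> l"
  shows "{C. circuit (uniform (k - 2) {0..<k}) C \<and> k - 1 \<notin> C} \<union>
         {C. circuit (uniform (l - 2) {k - 1..<k - 1 + l}) C \<and> k - 1 \<notin> C} \<union>
         {C1 \<union> C2 |C1 C2. circuit (uniform (k - 2) {0..<k}) C1 \<and> k - 1 \<in> C1 \<and>
            circuit (uniform (l - 2) {k - 1..<k - 1 + l}) C2 \<and> k - 1 \<in> C2}
       = {{0..<k - 1}, {k..<k + l - 1}} \<union> {{0..<k + l - 1} - {a, b} |a b. a \<in> {0..<k - 1} \<and> b \<in> {k..<k + l - 1}}"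
    (is "?T1 \<union> ?T2 \<union> ?T3 = ?R")
proof -
  have cu1: "circuit (uniform (k - 2) {0..<k}) C \<longleftrightarrow> C \<subseteq> {0..<k} \<and> card C = k - 1" for C
  proof -
    have "Suc (k - 2) = k - 1" using k by simp
    then show ?thesis using circuit_uniform[of "{0..<k}" "k - 2" C] by simp
  qed
  have cu2: "circuit (uniform (l - 2) {k - 1..<k - 1 + l}) C \<longleftrightarrow> C \<subseteq> {k - 1..<k - 1 + l} \<and> card C = l - 1" for C
  proof -
    have "Suc (l - 2) = l - 1" using l by simp
    then show ?thesis using circuit_uniform[of "{k - 1..<k - 1 + l}" "l - 2" C] by simp
  qed
  have e1: "?T1 = {{0..<k - 1}}"
  proof
    show "?T1 \<subseteq> {{0..<k - 1}}"
    proof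
      fix C assume "C \<in> ?T1"
      then have C: "C \<subseteq> {0..<k}" "card C = k - 1" "k - 1 \<notin> C" using cu1 by auto
      have s: "C \<subseteq> {0..<k - 1}"
      proof
        fix x assume x: "x \<in> C"
        then have "x < k" "x \<noteq> k - 1" using C by auto
        then show "x \<in> {0..<k - 1}" by simp
      qed
      have "C = {0..<k - 1}" by (rule card_subset_eq) (use s C in auto)
      then show "C \<in> {{0..<k - 1}}" by simp
    qed
    show "{{0..<k - 1}} \<subseteq> ?T1" using cu1 k by auto
  qed
  have e2: "?T2 = {{k..<k + l - 1}}"
  proof
    show "?T2 \<subseteq> {{k..<k + l - 1}}"
    proof
      fix C assume "C \<in> ?T2"
      then have C: "C \<subseteq> {k - 1..<k - 1 + l}" "card C = l - 1" "k - 1 \<notin> C" using cu2 by auto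
      have s: "C \<subseteq> {k..<k + l - 1}"
      proof
        fix x assume x: "x \<in> C"
        then have "k - 1 \<le> x" "x < k - 1 + l" "x \<noteq> k - 1" using C by auto
        then show "x \<in> {k..<k + l - 1}" using k by simp
      qed
      have "card {k..<k + l - 1} = l - 1" using k l by simp
      then have "C = {k..<k + l - 1}" using card_subset_eq[OF _ s] C by simp
      then show "C \<in> {{k..<k + l - 1}}" by simp
    qed
    show "{{k..<k + l - 1}} \<subseteq> ?T2"
    proof -
      have "{k..<k + l - 1} \<subseteq> {k - 1..<k - 1 + l}" "card {k..<k + l - 1} = l - 1" "k - 1 \<notin> {k..<k + l - 1}"
        using k l by auto
      then show ?thesis using cu2 by auto
    qed
  qed
  have eqs: "({0..<k} - {a}) \<union> ({k - 1..<k - 1 + l} - {b}) = {0..<k + l - 1} - {a, b}"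
    if a: "a < k - 1" and b: "k \<le> b" "b < k + l - 1" for a b
  proof (rule set_eqI)
    fix x
    show "x \<in> ({0..<k} - {a}) \<union> ({k - 1..<k - 1 + l} - {b}) \<longleftrightarrow> x \<in> {0..<k + l - 1} - {a, b}"
      unfolding Un_iff Diff_iff atLeastLessThan_iff insert_iff singleton_iff empty_iff
      using a b k l by arith
  qed
  have e3: "?T3 = {{0..<k + l - 1} - {a, b} |a b. a \<in> {0..<k - 1} \<and> b \<in> {k..<k + l - 1}}"
  proof
    show "?T3 \<subseteq> {{0..<k + l - 1} - {a, b} |a b. a \<in> {0..<k - 1} \<and> b \<in> {k..<k + l - 1}}"
    proof
      fix C assume "C \<in> ?T3"
      then obtain C1 C2 where C: "C = C1 \<union> C2" and c1: "circuit (uniform (k - 2) {0..<k}) C1" "k - 1 \<in> C1"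
        and c2: "circuit (uniform (l - 2) {k - 1..<k - 1 + l}) C2" "k - 1 \<in> C2" by blast
      have C1: "C1 \<subseteq> {0..<k}" "card C1 = k - 1" "k - 1 \<in> C1" using c1 cu1 by auto
      have C2: "C2 \<subseteq> {k - 1..<k - 1 + l}" "card C2 = l - 1" "k - 1 \<in> C2" using c2 cu2 by auto
      have "Suc (card C1) = card {0..<k}" using C1(2) k by simp
      then obtain a where a: "a \<in> {0..<k}" "C1 = {0..<k} - {a}" using minus_one[of "{0..<k}" C1] C1(1) by blast
      have "Suc (card C2) = card {k - 1..<k - 1 + l}" using C2(2) l by simp
      then obtain b where b: "b \<in> {k - 1..<k - 1 + l}" "C2 = {k - 1..<k - 1 + l} - {b}"
        using minus_one[of "{k - 1..<k - 1 + l}" C2] C2(1) by blast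
      have "a \<noteq> k - 1" using a(2) C1(3) by blast
      then have a': "a < k - 1" using a(1) by simp
      have "b \<noteq> k - 1" using b(2) C2(3) by blast
      then have b': "k \<le> b" "b < k + l - 1" using b(1) k by auto
      have "C = {0..<k + l - 1} - {a, b}" unfolding C a(2) b(2) by (rule eqs[OF a' b'])
      moreover have "a \<in> {0..<k - 1}" "b \<in> {k..<k + l - 1}" using a' b' by auto
      ultimately show "C \<in> {{0..<k + l - 1} - {a, b} |a b. a \<in> {0..<k - 1} \<and> b \<in> {k..<k + l - 1}}" by blast
    qed
    show "{{0..<k + l - 1} - {a, b} |a b. a \<in> {0..<k - 1} \<and> b \<in> {k..<k + l - 1}} \<subseteq> ?T3"
    proof
      fix C assume "C \<in> {{0..<k + l - 1} - {a, b} |a b. a \<in> {0..<k - 1} \<and> b \<in> {k..<k + l - 1}}"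
      then obtain a b where C: "C = {0..<k + l - 1} - {a, b}" and a: "a \<in> {0..<k - 1}" and b: "b \<in> {k..<k + l - 1}" by blast
      have a': "a < k - 1" using a by simp
      have b': "k \<le> b" "b < k + l - 1" using b by auto
      define C1 where "C1 = {0..<k} - {a}"
      define C2 where "C2 = {k - 1..<k - 1 + l} - {b}"
      have 1: "C1 \<subseteq> {0..<k}" "card C1 = k - 1" "k - 1 \<in> C1" unfolding C1_def using a' k by auto
      have 2: "C2 \<subseteq> {k - 1..<k - 1 + l}" "card C2 = l - 1" "k - 1 \<in> C2" unfolding C2_def using b' k l by auto
      have "C = C1 \<union> C2" unfolding C C1_def C2_def by (rule eqs[OF a' b', symmetric])
      moreover have "circuit (uniform (k - 2) {0..<k}) C1" using 1 cu1 by simp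
      moreover have "circuit (uniform (l - 2) {k - 1..<k - 1 + l}) C2" using 2 cu2 by simp
      ultimately show "C \<in> ?T3" using 1(3) 2(3) by blast
    qed
  qed
  show ?thesis unfolding e1 e2 e3 by blast
qed

lemma SU_indeps: assumes k: "3 \<le> k" and l: "3 \<le> l"
  shows "Y \<in> indeps (SU k l) \<longleftrightarrow> Y \<subseteq> {0..<k + l - 1} \<and> \<not> {0..<k - 1} \<subseteq> Y \<and> \<not> {k..<k + l - 1} \<subseteq> Y \<and>
     \<not> (\<exists>a\<in>{0..<k - 1}. \<exists>b\<in>{k..<k + l - 1}. {0..<k + l - 1} - {a, b} \<subseteq> Y)"
proof -
  have g: "gnd (uniform (k - 2) {0..<k}) \<union> gnd (uniform (l - 2) {k - 1..<k - 1 + l}) = {0..<k + l - 1}" using k l by auto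
  have i: "indeps (SU k l) = {X. X \<subseteq> gnd (uniform (k - 2) {0..<k}) \<union> gnd (uniform (l - 2) {k - 1..<k - 1 + l}) \<and>
     (\<forall>C\<in>{C. circuit (uniform (k - 2) {0..<k}) C \<and> k - 1 \<notin> C} \<union>
         {C. circuit (uniform (l - 2) {k - 1..<k - 1 + l}) C \<and> k - 1 \<notin> C} \<union>
         {C1 \<union> C2 |C1 C2. circuit (uniform (k - 2) {0..<k}) C1 \<and> k - 1 \<in> C1 \<and>
            circuit (uniform (l - 2) {k - 1..<k - 1 + l}) C2 \<and> k - 1 \<in> C2}. \<not> C \<subseteq> X)}"
    unfolding SU_def series_connection_def Let_def by (simp only: matroid.sel)
  have i2: "indeps (SU k l) = {X. X \<subseteq> {0..<k + l - 1} \<and>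
     (\<forall>C\<in>{{0..<k - 1}, {k..<k + l - 1}} \<union> {{0..<k + l - 1} - {a, b} |a b. a \<in> {0..<k - 1} \<and> b \<in> {k..<k + l - 1}}. \<not> C \<subseteq> X)}"
    unfolding i g SU_circs[OF k l] ..
  have h1: "(\<forall>C\<in>{{0..<k - 1}, {k..<k + l - 1}} \<union> {{0..<k + l - 1} - {a, b} |a b. a \<in> {0..<k - 1} \<and> b \<in> {k..<k + l - 1}}. \<not> C \<subseteq> Y)
     \<longleftrightarrow> \<not> {0..<k - 1} \<subseteq> Y \<and> \<not> {k..<k + l - 1} \<subseteq> Y \<and>
        (\<forall>C\<in>{{0..<k + l - 1} - {a, b} |a b. a \<in> {0..<k - 1} \<and> b \<in> {k..<k + l - 1}}. \<not> C \<subseteq> Y)" by blast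
  have h2: "(\<forall>C\<in>{{0..<k + l - 1} - {a, b} |a b. a \<in> {0..<k - 1} \<and> b \<in> {k..<k + l - 1}}. \<not> C \<subseteq> Y)
     \<longleftrightarrow> \<not> (\<exists>a\<in>{0..<k - 1}. \<exists>b\<in>{k..<k + l - 1}. {0..<k + l - 1} - {a, b} \<subseteq> Y)" by blast
  show ?thesis unfolding i2 mem_Collect_eq h1 h2 ..
qed

lemma iso_skew: assumes w: "wf_matroid N" and iso: "iso N S"
  and A: "A \<subseteq> gnd S" and B: "B \<subseteq> gnd S" and d: "A \<inter> B = {}" and a0: "a0 \<in> A" and b0: "b0 \<in> B"
  and nA: "A \<notin> indeps S" and nB: "B \<notin> indeps S"
  and iA: "\<forall>a\<in>A. A - {a} \<in> indeps S" and iB: "\<forall>b\<in>B. B - {b} \<in> indeps S"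
  and iAB: "\<forall>a\<in>A. \<forall>b\<in>B. (A - {a}) \<union> (B - {b}) \<in> indeps S"
  shows "has_skew_circuits N"
proof -
  obtain \<phi> where bij: "bij_betw \<phi> (gnd N) (gnd S)"
    and ind: "\<And>X. X \<subseteq> gnd N \<Longrightarrow> X \<in> indeps N \<longleftrightarrow> \<phi> ` X \<in> indeps S"
    using iso unfolding iso_def by blast
  have inj: "inj_on \<phi> (gnd N)" and img: "\<phi> ` gnd N = gnd S" using bij unfolding bij_betw_def by auto
  have pre: "\<phi> ` {x \<in> gnd N. \<phi> x \<in> T} = T" if T: "T \<subseteq> gnd S" for T
  proof
    show "\<phi> ` {x \<in> gnd N. \<phi> x \<in> T} \<subseteq> T" by blast
    show "T \<subseteq> \<phi> ` {x \<in> gnd N. \<phi> x \<in> T}"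
    proof
      fix t assume t: "t \<in> T"
      then have "t \<in> \<phi> ` gnd N" using T img by blast
      then obtain x where "x \<in> gnd N" "t = \<phi> x" by blast
      then show "t \<in> \<phi> ` {x \<in> gnd N. \<phi> x \<in> T}" using t by blast
    qed
  qed
  have rm: "\<phi> ` (Y - {x}) = \<phi> ` Y - {\<phi> x}" if "Y \<subseteq> gnd N" "x \<in> gnd N" for Y x
  proof -
    have "Y - {x} \<subseteq> gnd N" "{x} \<subseteq> gnd N" using that by blast+
    then show ?thesis using inj_on_image_set_diff[OF inj, of Y "{x}"] by simp
  qed
  define X1 where "X1 = {x \<in> gnd N. \<phi> x \<in> A}"
  define X2 where "X2 = {x \<in> gnd N. \<phi> x \<in> B}"
  have X1: "X1 \<subseteq> gnd N" "\<phi> ` X1 = A" unfolding X1_def using pre[OF A] by auto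
  have X2: "X2 \<subseteq> gnd N" "\<phi> ` X2 = B" unfolding X2_def using pre[OF B] by auto
  have circ: "circuit N X" if X: "X \<subseteq> gnd N" "\<phi> ` X = T" "T \<notin> indeps S" "\<forall>t\<in>T. T - {t} \<in> indeps S" for X T
  proof (rule circuitI[OF w X(1)])
    show "X \<notin> indeps N" using ind[OF X(1)] X by simp
    show "\<forall>x\<in>X. X - {x} \<in> indeps N"
    proof
      fix x assume x: "x \<in> X"
      have "\<phi> ` (X - {x}) = T - {\<phi> x}" using rm[of X x] X x by blast
      moreover have "\<phi> x \<in> T" using X x by blast
      ultimately have "\<phi> ` (X - {x}) \<in> indeps S" using X(4) by simp
      moreover have "X - {x} \<subseteq> gnd N" using X by blast
      ultimately show "X - {x} \<in> indeps N" using ind by blast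
    qed
  qed
  have c1: "circuit N X1" by (rule circ[OF X1 nA iA])
  have c2: "circuit N X2" by (rule circ[OF X2 nB iB])
  obtain x1 where x1: "x1 \<in> X1" "\<phi> x1 = a0" using X1(2) a0 by (metis imageE)
  obtain x2 where x2: "x2 \<in> X2" "\<phi> x2 = b0" using X2(2) b0 by (metis imageE)
  have dX: "X1 \<inter> X2 = {}" unfolding X1_def X2_def using d by blast
  have ne: "X1 \<noteq> X2" using x1 dX by blast
  define Y where "Y = (X1 - {x1}) \<union> (X2 - {x2})"
  have YE: "Y \<subseteq> gnd N" unfolding Y_def using X1 X2 by blast
  have "\<phi> ` Y = (\<phi> ` (X1 - {x1})) \<union> (\<phi> ` (X2 - {x2}))" unfolding Y_def by (rule image_Un)
  also have "\<dots> = (A - {a0}) \<union> (B - {b0})" using rm[of X1 x1] rm[of X2 x2] X1 X2 x1 x2 by blast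
  finally have "\<phi> ` Y \<in> indeps S" using iAB a0 b0 by simp
  then have iY: "Y \<in> indeps N" using ind[OF YE] by simp
  have f1: "finite X1" using circuit_props(3)[OF w c1] .
  have f2: "finite X2" using circuit_props(3)[OF w c2] .
  have "card Y = card (X1 - {x1}) + card (X2 - {x2})" unfolding Y_def
    by (rule card_Un_disjoint) (use f1 f2 dX in auto)
  then have cY: "card Y = (card X1 - 1) + (card X2 - 1)" using x1 x2 f1 f2 by simp
  have "Y \<subseteq> X1 \<union> X2" unfolding Y_def by blast
  then have "card Y \<le> rank N (X1 \<union> X2)" using rank_ge[OF w _ iY] by blast
  moreover have "rank N X1 = card X1 - 1" "rank N X2 = card X2 - 1" using circuit_props(6)[OF w c1] circuit_props(6)[OF w c2] by auto
  moreover have "rank N (X1 \<union> X2) \<le> rank N X1 + rank N X2" by (rule rank_union_le[OF w])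
  ultimately have "rank N X1 + rank N X2 = rank N (X1 \<union> X2)" using cY by linarith
  then show ?thesis unfolding has_skew_circuits_def skew_def using c1 c2 ne by blast
qed

lemma SU_skew: assumes w: "wf_matroid N" and iso: "iso N (SU k l)" and k: "3 \<le> k" and l: "3 \<le> l"
  shows "has_skew_circuits N"
proof -
  let ?E = "{0..<k + l - 1}" and ?A = "{0..<k - 1}" and ?B = "{k..<k + l - 1}"
  have gE: "gnd (SU k l) = ?E" by (rule SU_gnd[OF k l])
  have good: "Y \<in> indeps (SU k l)" if Y: "Y \<subseteq> ?E" "k - 1 \<notin> Y" "\<not> ?A \<subseteq> Y" "\<not> ?B \<subseteq> Y" for Y
  proof -
    have "\<not> (\<exists>a\<in>?A. \<exists>b\<in>?B. ?E - {a, b} \<subseteq> Y)"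
    proof
      assume "\<exists>a\<in>?A. \<exists>b\<in>?B. ?E - {a, b} \<subseteq> Y"
      then obtain a b where a: "a \<in> ?A" and b: "b \<in> ?B" and s: "?E - {a, b} \<subseteq> Y" by blast
      have "k - 1 \<in> ?E - {a, b}" using a b k l by auto
      then show False using s Y(2) by blast
    qed
    then show ?thesis using SU_indeps[OF k l] Y by blast
  qed
  have AE: "?A \<subseteq> ?E" and BE: "?B \<subseteq> ?E" by auto
  have kA: "k - 1 \<notin> ?A" and kB: "k - 1 \<notin> ?B" using k by auto
  have kinB: "k \<in> ?B" using l by simp
  have zA: "0 \<in> ?A" using k by simp
  show ?thesis
  proof (rule iso_skew[OF w iso, of ?A ?B 0 k])
    show "?A \<subseteq> gnd (SU k l)" "?B \<subseteq> gnd (SU k l)" using gE AE BE by auto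
    show "?A \<inter> ?B = {}" by auto
    show "0 \<in> ?A" by (rule zA)
    show "k \<in> ?B" by (rule kinB)
    show "?A \<notin> indeps (SU k l)" using SU_indeps[OF k l] by blast
    show "?B \<notin> indeps (SU k l)" using SU_indeps[OF k l] by blast
    show "\<forall>a\<in>?A. ?A - {a} \<in> indeps (SU k l)"
    proof
      fix a assume a: "a \<in> ?A"
      show "?A - {a} \<in> indeps (SU k l)"
      proof (rule good)
        show "?A - {a} \<subseteq> ?E" using AE by blast
        show "k - 1 \<notin> ?A - {a}" using kA by blast
        show "\<not> ?A \<subseteq> ?A - {a}" using a by blast
        show "\<not> ?B \<subseteq> ?A - {a}" using kinB by auto
      qed
    qed
    show "\<forall>b\<in>?B. ?B - {b} \<in> indeps (SU k l)"
    proof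
      fix b assume b: "b \<in> ?B"
      show "?B - {b} \<in> indeps (SU k l)"
      proof (rule good)
        show "?B - {b} \<subseteq> ?E" using BE by blast
        show "k - 1 \<notin> ?B - {b}" using kB by blast
        have "0 \<notin> ?B - {b}" using k by simp
        then show "\<not> ?A \<subseteq> ?B - {b}" using zA by blast
        show "\<not> ?B \<subseteq> ?B - {b}" using b by blast
      qed
    qed
    show "\<forall>a\<in>?A. \<forall>b\<in>?B. (?A - {a}) \<union> (?B - {b}) \<in> indeps (SU k l)"
    proof (intro ballI)
      fix a b assume a: "a \<in> ?A" and b: "b \<in> ?B"
      show "(?A - {a}) \<union> (?B - {b}) \<in> indeps (SU k l)"
      proof (rule good)
        show "(?A - {a}) \<union> (?B - {b}) \<subseteq> ?E" using AE BE by blast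
        show "k - 1 \<notin> (?A - {a}) \<union> (?B - {b})" using kA kB by blast
        have "a \<notin> ?B" using a by auto
        then show "\<not> ?A \<subseteq> (?A - {a}) \<union> (?B - {b})" using a by blast
        have "b \<notin> ?A" using b by auto
        then show "\<not> ?B \<subseteq> (?A - {a}) \<union> (?B - {b})" using b by blast
      qed
    qed
  qed
qed




section \<open>Reduction to SU\<close>

definition Inv :: "'a matroid \<Rightarrow> 'a set \<Rightarrow> 'a set \<Rightarrow> 'a set \<Rightarrow> bool" where
  "Inv N C1 C2 P \<longleftrightarrow> wf_matroid N \<and> gnd N = C1 \<union> C2 \<union> P \<and> C1 \<inter> C2 = {} \<and> C1 \<inter> P = {} \<and> C2 \<inter> P = {}
    \<and> circuit N C1 \<and> circuit N C2 \<and> P \<noteq> {} \<and> rank N (gnd N) + 3 = card (gnd N)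
    \<and> rank N (C1 \<union> C2) + 2 = card C1 + card C2
    \<and> rank N (C2 \<union> P) + card C1 = rank N (gnd N) + 2
    \<and> rank N (C1 \<union> P) + card C2 = rank N (gnd N) + 2
    \<and> (\<forall>x\<in>gnd N. rank N (gnd N - {x}) = rank N (gnd N))"

lemma InvD: assumes "Inv N C1 C2 P"
  shows "wf_matroid N" "gnd N = C1 \<union> C2 \<union> P" "C1 \<inter> C2 = {}" "C1 \<inter> P = {}" "C2 \<inter> P = {}"
    "circuit N C1" "circuit N C2" "P \<noteq> {}" "rank N (gnd N) + 3 = card (gnd N)"
    "rank N (C1 \<union> C2) + 2 = card C1 + card C2"
    "rank N (C2 \<union> P) + card C1 = rank N (gnd N) + 2"
    "rank N (C1 \<union> P) + card C2 = rank N (gnd N) + 2"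
    "\<And>x. x \<in> gnd N \<Longrightarrow> rank N (gnd N - {x}) = rank N (gnd N)"
  using assms unfolding Inv_def by blast+

lemma Inv_sym: assumes "Inv N C1 C2 P" shows "Inv N C2 C1 P"
proof -
  note d = InvD[OF assms]
  have "C2 \<union> C1 \<union> P = C1 \<union> C2 \<union> P" "C2 \<union> C1 = C1 \<union> C2" "C2 \<inter> C1 = C1 \<inter> C2" by blast+
  then show ?thesis unfolding Inv_def using d by (simp add: add.commute)
qed

lemma Inv_card: assumes "Inv N C1 C2 P"
  shows "card (gnd N) = card C1 + card C2 + card P" "finite C1" "finite C2" "finite P"
proof -
  note d = InvD[OF assms]
  have fE: "finite (gnd N)" using wfD(1)[OF d(1)] .
  show f1: "finite C1" "finite C2" "finite P" using fE d(2) finite_subset by auto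
  have "card (C1 \<union> C2) = card C1 + card C2" by (rule card_Un_disjoint[OF f1(1,2) d(3)])
  moreover have "card ((C1 \<union> C2) \<union> P) = card (C1 \<union> C2) + card P"
    by (rule card_Un_disjoint) (use f1 d(4,5) in auto)
  ultimately show "card (gnd N) = card C1 + card C2 + card P" using d(2) by simp
qed

lemma sc_common: assumes w: "wf_matroid N" and c: "cocircuit N {f, g}"
  and nul: "rank N (gnd N) + 3 = card (gnd N)" and nc: "\<And>x. x \<in> gnd N \<Longrightarrow> rank N (gnd N - {x}) = rank N (gnd N)"
  shows "rank (contract N {f}) (gnd (contract N {f})) + 1 = rank N (gnd N)"
    "rank (contract N {f}) (gnd (contract N {f})) + 3 = card (gnd (contract N {f}))"
    "\<And>x. x \<in> gnd (contract N {f}) \<Longrightarrow> rank (contract N {f}) (gnd (contract N {f}) - {x}) = rank (contract N {f}) (gnd (contract N {f}))"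
proof -
  have fE: "f \<in> gnd N" using cocircuitD(1)[OF w c] .
  have g: "gnd (contract N {f}) = gnd N - {f}" by simp
  have a: "rank (contract N {f}) (gnd N - {f}) + 1 = rank N (insert f (gnd N - {f}))" by (rule rank_sc[OF w c]) blast
  have i: "insert f (gnd N - {f}) = gnd N" using fE by blast
  show 1: "rank (contract N {f}) (gnd (contract N {f})) + 1 = rank N (gnd N)" using a i g by simp
  have fin: "finite (gnd N)" using wfD(1)[OF w] .
  have pos: "card (gnd N) > 0" using fE fin card_gt_0_iff by blast
  have "card (gnd N - {f}) = card (gnd N) - 1" using fE fin by simp
  then have "card (gnd N - {f}) + 1 = card (gnd N)" using pos by linarith
  then show "rank (contract N {f}) (gnd (contract N {f})) + 3 = card (gnd (contract N {f}))" using 1 nul g by simp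
  fix x assume x: "x \<in> gnd (contract N {f})"
  have b: "rank (contract N {f}) (gnd N - {f} - {x}) + 1 = rank N (insert f (gnd N - {f} - {x}))" by (rule rank_sc[OF w c]) blast
  have j: "insert f (gnd N - {f} - {x}) = gnd N - {x}" using fE x by auto
  have "rank N (gnd N - {x}) = rank N (gnd N)" using nc x by simp
  then show "rank (contract N {f}) (gnd (contract N {f}) - {x}) = rank (contract N {f}) (gnd (contract N {f}))"
    using b j 1 g by simp
qed

lemma step_P: assumes I: "Inv N C1 C2 P" and f: "f \<in> P" and g: "g \<in> P" and fg: "f \<noteq> g"
  shows "cocircuit N {f, g} \<and> Inv (contract N {f}) C1 C2 (P - {f})"
proof -
  note d = InvD[OF I]
  note cd = Inv_card[OF I]
  have w: "wf_matroid N" by (rule d(1))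
  let ?E = "gnd N"
  have fE: "f \<in> ?E" "g \<in> ?E" using f g d(2) by auto
  have sub: "?E - {f, g} \<subseteq> (C1 \<union> C2) \<union> (P - {f, g})" using d(2) by blast
  have fP2: "finite (P - {f, g})" using cd(4) by simp
  have "rank N (?E - {f, g}) \<le> rank N ((C1 \<union> C2) \<union> (P - {f, g}))" by (rule rank_mono[OF w sub])
  also have "\<dots> \<le> rank N (C1 \<union> C2) + card (P - {f, g})" by (rule rank_union_card[OF w fP2])
  finally have r1: "rank N (?E - {f, g}) \<le> rank N (C1 \<union> C2) + card (P - {f, g})" .
  have fgP: "{f, g} \<subseteq> P" using f g by blast
  have "card {f, g} \<le> card P" by (rule card_mono[OF cd(4) fgP])
  moreover have "card {f, g} = 2" using fg by simp
  moreover have "card (P - {f, g}) = card P - card {f, g}" by (rule card_Diff_subset) (use fgP in auto)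
  ultimately have "card (P - {f, g}) + 2 = card P" by linarith
  then have "rank N (?E - {f, g}) \<noteq> rank N ?E" using r1 d(9,10) cd(1) by linarith
  then have coc: "cocircuit N {f, g}"
    using cocircuitI2[OF w fE fg] d(13)[OF fE(1)] d(13)[OF fE(2)] by blast
  let ?N = "contract N {f}"
  have wc: "wf_matroid ?N" by (rule wf_contract[OF w])
  note sc = sc_common[OF w coc d(9) d(13)]
  have gnd': "gnd ?N = C1 \<union> C2 \<union> (P - {f})" using d(2) d(4,5) f by auto
  have c1: "circuit ?N C1" by (rule circ_sc_keep[OF w coc d(6)]) (use f g d(4) in blast)+
  have c2: "circuit ?N C2" by (rule circ_sc_keep[OF w coc d(7)]) (use f g d(5) in blast)+
  have ne: "P - {f} \<noteq> {}" using g fg by blast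
  have r0: "rank ?N (C1 \<union> C2) + 1 = rank N (insert f (C1 \<union> C2))" by (rule rank_sc[OF w coc]) (use f d(4,5) d(2) in auto)
  have r0': "rank N (insert f (C1 \<union> C2)) = Suc (rank N (C1 \<union> C2))" by (rule series_notcl[OF w coc]) (use f g d(4,5) d(2) in auto)
  have ra: "rank ?N (C2 \<union> (P - {f})) + 1 = rank N (insert f (C2 \<union> (P - {f})))" by (rule rank_sc[OF w coc]) (use d(2,5) f in blast)
  have ia: "insert f (C2 \<union> (P - {f})) = C2 \<union> P" using f by blast
  have rb: "rank ?N (C1 \<union> (P - {f})) + 1 = rank N (insert f (C1 \<union> (P - {f})))" by (rule rank_sc[OF w coc]) (use d(2,4) f in blast)
  have ib: "insert f (C1 \<union> (P - {f})) = C1 \<union> P" using f by blast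
  have "Inv ?N C1 C2 (P - {f})" unfolding Inv_def
  proof (intro conjI)
    show "wf_matroid ?N" by (rule wc)
    show "gnd ?N = C1 \<union> C2 \<union> (P - {f})" by (rule gnd')
    show "C1 \<inter> C2 = {}" "C1 \<inter> (P - {f}) = {}" "C2 \<inter> (P - {f}) = {}" using d(3,4,5) by blast+
    show "circuit ?N C1" "circuit ?N C2" "P - {f} \<noteq> {}" by (rule c1, rule c2, rule ne)
    show "rank ?N (gnd ?N) + 3 = card (gnd ?N)" by (rule sc(2))
    show "rank ?N (C1 \<union> C2) + 2 = card C1 + card C2" using r0 r0' d(10) by simp
    show "rank ?N (C2 \<union> (P - {f})) + card C1 = rank ?N (gnd ?N) + 2" using ra ia d(11) sc(1) by simp
    show "rank ?N (C1 \<union> (P - {f})) + card C2 = rank ?N (gnd ?N) + 2" using rb ib d(12) sc(1) by simp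
    show "\<forall>x\<in>gnd ?N. rank ?N (gnd ?N - {x}) = rank ?N (gnd ?N)" using sc(3) by blast
  qed
  then show ?thesis using coc by blast
qed

lemma step_C: assumes I: "Inv N C1 C2 P" and a: "a \<in> C1" and a': "a' \<in> C1" and aa: "a \<noteq> a'"
  and coc: "cocircuit N {a, a'}"
  shows "Inv (contract N {a}) (C1 - {a}) C2 P"
proof -
  note d = InvD[OF I]
  note cd = Inv_card[OF I]
  have w: "wf_matroid N" by (rule d(1))
  let ?E = "gnd N"
  have c3: "card C1 \<ge> 3"
  proof (rule ccontr)
    assume "\<not> card C1 \<ge> 3"
    moreover have "card C1 \<ge> 2"
    proof -
      have "{a, a'} \<subseteq> C1" using a a' by blast
      then have "card {a, a'} \<le> card C1" using card_mono[OF cd(2)] by blast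
      then show ?thesis using aa by simp
    qed
    ultimately have "card C1 = 2" by linarith
    moreover have "{a, a'} \<subseteq> C1" using a a' by blast
    moreover have "card {a, a'} = 2" using aa by simp
    ultimately have "C1 = {a, a'}" using card_subset_eq[OF cd(2)] by metis
    then have "?E - {a, a'} = C2 \<union> P" using d(2,3,4) by blast
    moreover have "rank N (C2 \<union> P) = rank N ?E" using d(11) \<open>card C1 = 2\<close> by simp
    ultimately show False using cocircuitD(3)[OF w coc] by simp
  qed
  let ?N = "contract N {a}"
  have wc: "wf_matroid ?N" by (rule wf_contract[OF w])
  note sc = sc_common[OF w coc d(9) d(13)]
  have gnd': "gnd ?N = (C1 - {a}) \<union> C2 \<union> P" using d(2) d(3,4) a by auto
  have c1: "circuit ?N (C1 - {a})" by (rule circ_sc_shrink[OF w coc d(6) a c3])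
  have c2: "circuit ?N C2" by (rule circ_sc_keep[OF w coc d(7)]) (use a a' d(3) in blast)+
  have r0: "rank ?N ((C1 - {a}) \<union> C2) + 1 = rank N (insert a ((C1 - {a}) \<union> C2))" by (rule rank_sc[OF w coc]) (use d(2,3) a in blast)
  have i0: "insert a ((C1 - {a}) \<union> C2) = C1 \<union> C2" using a by blast
  have an: "a \<notin> C2" "a \<notin> P" "a' \<notin> C2" "a' \<notin> P" using a a' d(3,4) by blast+
  have s2: "C2 \<union> P \<subseteq> gnd N - {a}" using d(2) an by blast
  have ra: "rank ?N (C2 \<union> P) + 1 = rank N (insert a (C2 \<union> P))" by (rule rank_sc[OF w coc s2])
  have ra': "rank N (insert a (C2 \<union> P)) = Suc (rank N (C2 \<union> P))" by (rule series_notcl[OF w coc s2]) (use an in blast)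
  have rb: "rank ?N ((C1 - {a}) \<union> P) + 1 = rank N (insert a ((C1 - {a}) \<union> P))" by (rule rank_sc[OF w coc]) (use d(2,4) a in blast)
  have ib: "insert a ((C1 - {a}) \<union> P) = C1 \<union> P" using a by blast
  have cc: "card (C1 - {a}) + 1 = card C1" using c3 a cd(2) by simp
  show ?thesis unfolding Inv_def
  proof (intro conjI)
    show "wf_matroid ?N" by (rule wc)
    show "gnd ?N = (C1 - {a}) \<union> C2 \<union> P" by (rule gnd')
    show "(C1 - {a}) \<inter> C2 = {}" "(C1 - {a}) \<inter> P = {}" "C2 \<inter> P = {}" using d(3,4,5) by blast+
    show "circuit ?N (C1 - {a})" "circuit ?N C2" "P \<noteq> {}" by (rule c1, rule c2, rule d(8))
    show "rank ?N (gnd ?N) + 3 = card (gnd ?N)" by (rule sc(2))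
    show "rank ?N ((C1 - {a}) \<union> C2) + 2 = card (C1 - {a}) + card C2" using r0 i0 d(10) cc by simp
    show "rank ?N (C2 \<union> P) + card (C1 - {a}) = rank ?N (gnd ?N) + 2" using ra ra' d(11) sc(1) cc by simp
    show "rank ?N ((C1 - {a}) \<union> P) + card C2 = rank ?N (gnd ?N) + 2" using rb ib d(12) sc(1) by simp
    show "\<forall>x\<in>gnd ?N. rank ?N (gnd ?N - {x}) = rank ?N (gnd ?N)" using sc(3) by blast
  qed
qed

lemma nonser: assumes I: "Inv N C1 C2 P" and a: "a \<in> gnd N" "a' \<in> gnd N" "a \<noteq> a'"
  and nc: "\<not> cocircuit N {a, a'}"
  shows "rank N (gnd N - {a, a'}) = rank N (gnd N)"
  using cocircuitI2[OF InvD(1)[OF I] a] InvD(13)[OF I a(1)] InvD(13)[OF I a(2)] nc by blast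

lemma card_minus3: assumes "finite E" "x \<in> E" "y \<in> E" "z \<in> E" "x \<noteq> y" "x \<noteq> z" "y \<noteq> z"
  shows "card (E - {x, y, z}) + 3 = card E"
proof -
  have s: "{x, y, z} \<subseteq> E" using assms by blast
  have "card (E - {x, y, z}) = card E - card {x, y, z}" by (rule card_Diff_subset) (use s in auto)
  moreover have "card {x, y, z} = 3" using assms by simp
  moreover have "card {x, y, z} \<le> card E" by (rule card_mono[OF assms(1) s])
  ultimately show ?thesis by linarith
qed

lemma base_indep: assumes I: "Inv N C1 C2 {p}"
  and ns1: "\<And>a a'. a \<in> C1 \<Longrightarrow> a' \<in> C1 \<Longrightarrow> a \<noteq> a' \<Longrightarrow> rank N (gnd N - {a, a'}) = rank N (gnd N)"
  and ns2: "\<And>a a'. a \<in> C2 \<Longrightarrow> a' \<in> C2 \<Longrightarrow> a \<noteq> a' \<Longrightarrow> rank N (gnd N - {a, a'}) = rank N (gnd N)"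
  and Y: "Y \<subseteq> gnd N"
  shows "Y \<in> indeps N \<longleftrightarrow> \<not> C1 \<subseteq> Y \<and> \<not> C2 \<subseteq> Y \<and> \<not> (\<exists>a\<in>C1. \<exists>b\<in>C2. gnd N - {a, b} \<subseteq> Y)"
proof -
  note d = InvD[OF I]
  note cd = Inv_card[OF I]
  have w: "wf_matroid N" by (rule d(1))
  let ?E = "gnd N"
  have fE: "finite ?E" using wfD(1)[OF w] .
  show ?thesis
  proof
    assume i: "Y \<in> indeps N"
    have n1: "\<not> C1 \<subseteq> Y"
    proof
      assume "C1 \<subseteq> Y"
      then have "C1 \<in> indeps N" by (rule wfD(4)[OF w i])
      then show False using circuit_props(2)[OF w d(6)] by blast
    qed
    have n2: "\<not> C2 \<subseteq> Y"
    proof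
      assume "C2 \<subseteq> Y"
      then have "C2 \<in> indeps N" by (rule wfD(4)[OF w i])
      then show False using circuit_props(2)[OF w d(7)] by blast
    qed
    have n3: "\<not> (\<exists>a\<in>C1. \<exists>b\<in>C2. ?E - {a, b} \<subseteq> Y)"
    proof
      assume "\<exists>a\<in>C1. \<exists>b\<in>C2. ?E - {a, b} \<subseteq> Y"
      then obtain a b where a: "a \<in> C1" and b: "b \<in> C2" and s: "?E - {a, b} \<subseteq> Y" by blast
      have ab: "a \<noteq> b" "a \<in> ?E" "b \<in> ?E" using a b d(2,3) by auto
      have "card (?E - {a, b}) = card ?E - card {a, b}" by (rule card_Diff_subset) (use ab in auto)
      moreover have "card {a, b} = 2" using ab by simp
      moreover have "card (?E - {a, b}) \<le> card Y" by (rule card_mono) (use Y fE finite_subset s in auto)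
      moreover have "rank N Y = card Y" by (rule rank_indep[OF w i])
      moreover have "rank N Y \<le> rank N ?E" by (rule rank_mono[OF w Y])
      ultimately show False using d(9) by linarith
    qed
    show "\<not> C1 \<subseteq> Y \<and> \<not> C2 \<subseteq> Y \<and> \<not> (\<exists>a\<in>C1. \<exists>b\<in>C2. ?E - {a, b} \<subseteq> Y)" using n1 n2 n3 by blast
  next
    assume h: "\<not> C1 \<subseteq> Y \<and> \<not> C2 \<subseteq> Y \<and> \<not> (\<exists>a\<in>C1. \<exists>b\<in>C2. ?E - {a, b} \<subseteq> Y)"
    then obtain a b where a: "a \<in> C1" "a \<notin> Y" and b: "b \<in> C2" "b \<notin> Y" by blast
    have r1: "rank N C1 + 1 = card C1" using circuit_props(6)[OF w d(6)] circuit_props(3,4)[OF w d(6)]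
      by (simp add: card_gt_0_iff)
    have r2: "rank N C2 + 1 = card C2" using circuit_props(6)[OF w d(7)] circuit_props(3,4)[OF w d(7)]
      by (simp add: card_gt_0_iff)
    have sk: "rank N C1 + rank N C2 = rank N (C1 \<union> C2)" using r1 r2 d(10) by linarith
    show "Y \<in> indeps N"
    proof (cases "p \<in> Y")
      case False
      have YC: "Y \<subseteq> C1 \<union> C2" using Y False d(2) by blast
      have iS: "Y \<inter> C1 \<in> indeps N" by (rule wfD(4)[OF w circuit_props(5)[OF w d(6) a(1)]]) (use a in blast)
      have iT: "Y \<inter> C2 \<in> indeps N" by (rule wfD(4)[OF w circuit_props(5)[OF w d(7) b(1)]]) (use b in blast)
      have "rank N (Y \<inter> C1) + rank N (Y \<inter> C2) = rank N ((Y \<inter> C1) \<union> (Y \<inter> C2))"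
        by (rule hered[OF w d(3) sk]) blast+
      moreover have "(Y \<inter> C1) \<union> (Y \<inter> C2) = Y" using YC by blast
      moreover have "card ((Y \<inter> C1) \<union> (Y \<inter> C2)) = card (Y \<inter> C1) + card (Y \<inter> C2)"
        by (rule card_Un_disjoint) (use cd(2,3) d(3) in auto)
      ultimately have "rank N Y = card Y" using rank_indep[OF w iS] rank_indep[OF w iT] by simp
      then show ?thesis using indep_iff_rank[OF w Y] by simp
    next
      case True
      obtain z where z: "z \<in> ?E" "z \<noteq> a" "z \<noteq> b" "z \<notin> Y" using h a b by blast
      have zp: "z \<noteq> p" using z True by blast
      have aE: "a \<in> ?E" "b \<in> ?E" using a b d(2) by auto
      have ab: "a \<noteq> b" using a b d(3) by blast
      have zC: "z \<in> C1 \<or> z \<in> C2" using z zp d(2) by blast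
      have indW: "W \<in> indeps N" if W: "W \<subseteq> ?E" "card W + 3 = card ?E" "rank N W = rank N ?E" for W
        using indep_iff_rank[OF w W(1)] W d(9) by simp
      show ?thesis
      proof (cases "z \<in> C1")
        case True
        define W where "W = ?E - {a, z, b}"
        have WE: "W \<subseteq> ?E" unfolding W_def by blast
        have cW: "card W + 3 = card ?E" unfolding W_def by (rule card_minus3[OF fE aE(1) z(1) aE(2)]) (use ab z in auto)
        have "rank N (insert b W) = rank N W" by (rule circuit_cl[OF w d(7) b(1)]) (use a True d(3) in \<open>auto simp: W_def d(2)\<close>)
        moreover have "insert b W = ?E - {a, z}" unfolding W_def using aE z ab by auto
        moreover have "rank N (?E - {a, z}) = rank N ?E" using ns1[OF a(1) True] z by blast
        ultimately have "rank N W = rank N ?E" by simp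
        then have "W \<in> indeps N" using indW[OF WE cW] by blast
        moreover have "Y \<subseteq> W" unfolding W_def using Y a b z by blast
        ultimately show ?thesis using wfD(4)[OF w] by blast
      next
        case False
        then have zC2: "z \<in> C2" using zC by blast
        define W where "W = ?E - {a, b, z}"
        have WE: "W \<subseteq> ?E" unfolding W_def by blast
        have cW: "card W + 3 = card ?E" unfolding W_def by (rule card_minus3[OF fE aE(1) aE(2) z(1)]) (use ab z in auto)
        have "rank N (insert a W) = rank N W" by (rule circuit_cl[OF w d(6) a(1)]) (use b zC2 d(3) in \<open>auto simp: W_def d(2)\<close>)
        moreover have "insert a W = ?E - {b, z}" unfolding W_def using aE z ab by auto
        moreover have "rank N (?E - {b, z}) = rank N ?E" using ns2[OF b(1) zC2] z by blast
        ultimately have "rank N W = rank N ?E" by simp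
        then have "W \<in> indeps N" using indW[OF WE cW] by blast
        moreover have "Y \<subseteq> W" unfolding W_def using Y a b z by blast
        ultimately show ?thesis using wfD(4)[OF w] by blast
      qed
    qed
  qed
qed

lemma img_sub_iff: assumes "inj_on f C" "A \<subseteq> C" "B \<subseteq> C" shows "f ` A \<subseteq> f ` B \<longleftrightarrow> A \<subseteq> B"
proof
  assume h: "f ` A \<subseteq> f ` B"
  show "A \<subseteq> B"
  proof
    fix x assume x: "x \<in> A"
    then have "f x \<in> f ` B" using h by blast
    then show "x \<in> B" using inj_on_image_mem_iff[OF assms(1) _ assms(3)] x assms(2) by blast
  qed
qed blast

lemma base_iso: assumes I: "Inv N C1 C2 {p}"
  and ns1: "\<And>a a'. a \<in> C1 \<Longrightarrow> a' \<in> C1 \<Longrightarrow> a \<noteq> a' \<Longrightarrow> rank N (gnd N - {a, a'}) = rank N (gnd N)"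
  and ns2: "\<And>a a'. a \<in> C2 \<Longrightarrow> a' \<in> C2 \<Longrightarrow> a \<noteq> a' \<Longrightarrow> rank N (gnd N - {a, a'}) = rank N (gnd N)"
  shows "3 \<le> card C1 + 1 \<and> 3 \<le> card C2 + 1 \<and> iso N (SU (card C1 + 1) (card C2 + 1))"
proof -
  note d = InvD[OF I]
  note cd = Inv_card[OF I]
  have w: "wf_matroid N" by (rule d(1))
  let ?E = "gnd N"
  define k where "k = card C1 + 1"
  define l where "l = card C2 + 1"
  have "rank N (C2 \<union> {p}) \<le> rank N ?E" by (rule rank_mono[OF w]) (use d(2) in blast)
  then have k3: "3 \<le> k" using d(11) unfolding k_def by linarith
  have "rank N (C1 \<union> {p}) \<le> rank N ?E" by (rule rank_mono[OF w]) (use d(2) in blast)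
  then have l3: "3 \<le> l" using d(12) unfolding l_def by linarith
  let ?A = "{0..<k - 1}" and ?B = "{k..<k + l - 1}" and ?ES = "{0..<k + l - 1}"
  have cA: "card ?A = card C1" unfolding k_def by simp
  have cB: "card ?B = card C2" unfolding l_def by simp
  obtain g1 where g1: "bij_betw g1 C1 ?A" using finite_same_card_bij[OF cd(2) _ cA[symmetric]] by blast
  obtain g2 where g2: "bij_betw g2 C2 ?B" using finite_same_card_bij[OF cd(3) _ cB[symmetric]] by blast
  define \<phi> where "\<phi> x = (if x \<in> C1 then g1 x else if x \<in> C2 then g2 x else k - 1)" for x
  have p1: "p \<notin> C1" "p \<notin> C2" using d(4,5) by auto
  have b1: "bij_betw \<phi> C1 ?A" using g1 bij_betw_cong[of C1 \<phi> g1 ?A] unfolding \<phi>_def by simp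
  have eq2: "\<And>x. x \<in> C2 \<Longrightarrow> \<phi> x = g2 x" using d(3) unfolding \<phi>_def by auto
  have b2: "bij_betw \<phi> C2 ?B" using g2 bij_betw_cong[of C2 \<phi> g2 ?B, OF eq2] by simp
  have b3: "bij_betw \<phi> {p} {k - 1}" unfolding bij_betw_def \<phi>_def using p1 by simp
  have AB: "?A \<inter> ?B = {}" by auto
  have b12: "bij_betw \<phi> (C1 \<union> C2) (?A \<union> ?B)" by (rule bij_betw_combine[OF b1 b2 AB])
  have ABk: "(?A \<union> ?B) \<inter> {k - 1} = {}" using k3 by auto
  have b123: "bij_betw \<phi> (C1 \<union> C2 \<union> {p}) (?A \<union> ?B \<union> {k - 1})" by (rule bij_betw_combine[OF b12 b3 ABk])
  have ES: "?A \<union> ?B \<union> {k - 1} = ?ES" using k3 l3 by auto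
  have gS: "gnd (SU k l) = ?ES" by (rule SU_gnd[OF k3 l3])
  have bij: "bij_betw \<phi> ?E (gnd (SU k l))" using b123 d(2) ES gS by simp
  have inj: "inj_on \<phi> ?E" using bij unfolding bij_betw_def by blast
  have imE: "\<phi> ` ?E = ?ES" using bij gS unfolding bij_betw_def by simp
  have imA: "\<phi> ` C1 = ?A" using b1 unfolding bij_betw_def by blast
  have imB: "\<phi> ` C2 = ?B" using b2 unfolding bij_betw_def by blast
  have C1E: "C1 \<subseteq> ?E" and C2E: "C2 \<subseteq> ?E" using d(2) by auto
  have diff: "\<phi> ` (?E - {a, b}) = ?ES - {\<phi> a, \<phi> b}" if "a \<in> ?E" "b \<in> ?E" for a b
  proof -
    have "\<phi> ` (?E - {a, b}) = \<phi> ` ?E - \<phi> ` {a, b}" by (rule inj_on_image_set_diff[OF inj]) (use that in auto)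
    then show ?thesis using imE by simp
  qed
  have key: "X \<in> indeps N \<longleftrightarrow> \<phi> ` X \<in> indeps (SU k l)" if X: "X \<subseteq> ?E" for X
  proof -
    have XS: "\<phi> ` X \<subseteq> ?ES" using X imE by blast
    have eA: "?A \<subseteq> \<phi> ` X \<longleftrightarrow> C1 \<subseteq> X" using img_sub_iff[OF inj C1E X] imA by simp
    have eB: "?B \<subseteq> \<phi> ` X \<longleftrightarrow> C2 \<subseteq> X" using img_sub_iff[OF inj C2E X] imB by simp
    have eC: "(\<exists>a\<in>?A. \<exists>b\<in>?B. ?ES - {a, b} \<subseteq> \<phi> ` X) \<longleftrightarrow> (\<exists>a\<in>C1. \<exists>b\<in>C2. ?E - {a, b} \<subseteq> X)"
    proof
      assume "\<exists>a\<in>?A. \<exists>b\<in>?B. ?ES - {a, b} \<subseteq> \<phi> ` X"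
      then obtain a b where a: "a \<in> ?A" and b: "b \<in> ?B" and s: "?ES - {a, b} \<subseteq> \<phi> ` X" by blast
      obtain a' where a': "a' \<in> C1" "a = \<phi> a'" using a imA by blast
      obtain b' where b': "b' \<in> C2" "b = \<phi> b'" using b imB by blast
      have "\<phi> ` (?E - {a', b'}) \<subseteq> \<phi> ` X" using s diff[of a' b'] a' b' C1E C2E by auto
      then have "?E - {a', b'} \<subseteq> X" using img_sub_iff[OF inj _ X] by blast
      then show "\<exists>a\<in>C1. \<exists>b\<in>C2. ?E - {a, b} \<subseteq> X" using a' b' by blast
    next
      assume "\<exists>a\<in>C1. \<exists>b\<in>C2. ?E - {a, b} \<subseteq> X"
      then obtain a b where a: "a \<in> C1" and b: "b \<in> C2" and s: "?E - {a, b} \<subseteq> X" by blast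
      have "\<phi> ` (?E - {a, b}) \<subseteq> \<phi> ` X" using s by blast
      then have "?ES - {\<phi> a, \<phi> b} \<subseteq> \<phi> ` X" using diff[of a b] a b C1E C2E by auto
      moreover have "\<phi> a \<in> ?A" "\<phi> b \<in> ?B" using a b imA imB by blast+
      ultimately show "\<exists>a\<in>?A. \<exists>b\<in>?B. ?ES - {a, b} \<subseteq> \<phi> ` X" by blast
    qed
    have "X \<in> indeps N \<longleftrightarrow> \<not> C1 \<subseteq> X \<and> \<not> C2 \<subseteq> X \<and> \<not> (\<exists>a\<in>C1. \<exists>b\<in>C2. ?E - {a, b} \<subseteq> X)"
      by (rule base_indep[OF I ns1 ns2 X])
    also have "\<dots> \<longleftrightarrow> \<phi> ` X \<in> indeps (SU k l)" unfolding SU_indeps[OF k3 l3] eA eB eC using XS by blast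
    finally show ?thesis .
  qed
  have "iso N (SU k l)" unfolding iso_def using bij key by blast
  then show ?thesis using k3 l3 unfolding k_def l_def by blast
qed

lemma Inv_minor: "Inv N C1 C2 P \<Longrightarrow> \<exists>N' k l. 3 \<le> k \<and> 3 \<le> l \<and> series_minor N' N \<and> iso N' (SU k l)"
proof (induction "card (gnd N)" arbitrary: N C1 C2 P rule: less_induct)
  case less
  note I = less.prems
  note d = InvD[OF I]
  have w: "wf_matroid N" by (rule d(1))
  have fE: "finite (gnd N)" using wfD(1)[OF w] .
  have red: "\<exists>N' k l. 3 \<le> k \<and> 3 \<le> l \<and> series_minor N' N \<and> iso N' (SU k l)"
    if c: "cocircuit N {f, g}" and I2: "Inv (contract N {f}) D1 D2 Q" for f g D1 D2 Q
  proof -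
    have fE': "f \<in> gnd N" using cocircuitD(1)[OF w c] .
    have "card (gnd (contract N {f})) < card (gnd N)" using card_Diff1_less[OF fE fE'] by simp
    then obtain N' k l where N': "3 \<le> k" "3 \<le> l" "series_minor N' (contract N {f})" "iso N' (SU k l)"
      using less.hyps I2 by blast
    have "series_minor (contract N {f}) N" by (rule series_minor.scon[OF series_minor.refl c])
    then have "series_minor N' N" using series_minor_trans N'(3) by blast
    then show ?thesis using N' by blast
  qed
  show ?case
  proof (cases "\<exists>f g. f \<in> P \<and> g \<in> P \<and> f \<noteq> g")
    case True
    then obtain f g where fg: "f \<in> P" "g \<in> P" "f \<noteq> g" by blast
    have "cocircuit N {f, g} \<and> Inv (contract N {f}) C1 C2 (P - {f})" by (rule step_P[OF I fg])
    then show ?thesis using red by blast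
  next
    case nP: False
    obtain p where P: "P = {p}" using d(8) nP by blast
    show ?thesis
    proof (cases "\<exists>a a'. a \<in> C1 \<and> a' \<in> C1 \<and> a \<noteq> a' \<and> cocircuit N {a, a'}")
      case True
      then obtain a a' where aa: "a \<in> C1" "a' \<in> C1" "a \<noteq> a'" "cocircuit N {a, a'}" by blast
      have "Inv (contract N {a}) (C1 - {a}) C2 P" by (rule step_C[OF I aa])
      then show ?thesis using red[OF aa(4)] by blast
    next
      case n1: False
      show ?thesis
      proof (cases "\<exists>a a'. a \<in> C2 \<and> a' \<in> C2 \<and> a \<noteq> a' \<and> cocircuit N {a, a'}")
        case True
        then obtain a a' where aa: "a \<in> C2" "a' \<in> C2" "a \<noteq> a'" "cocircuit N {a, a'}" by blast
        have "Inv (contract N {a}) (C2 - {a}) C1 P" by (rule step_C[OF Inv_sym[OF I] aa])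
        then show ?thesis using red[OF aa(4)] by blast
      next
        case n2: False
        have I1: "Inv N C1 C2 {p}" using I P by simp
        have ns1: "rank N (gnd N - {a, a'}) = rank N (gnd N)" if "a \<in> C1" "a' \<in> C1" "a \<noteq> a'" for a a'
          by (rule nonser[OF I]) (use that n1 d(2) in auto)
        have ns2: "rank N (gnd N - {a, a'}) = rank N (gnd N)" if "a \<in> C2" "a' \<in> C2" "a \<noteq> a'" for a a'
          by (rule nonser[OF I]) (use that n2 d(2) in auto)
        have "3 \<le> card C1 + 1 \<and> 3 \<le> card C2 + 1 \<and> iso N (SU (card C1 + 1) (card C2 + 1))"
          by (rule base_iso[OF I1 ns1 ns2])
        then show ?thesis using series_minor.refl by blast
      qed
    qed
  qed
qed

lemma dep_over: assumes w: "wf_matroid M" and A: "A \<subseteq> gnd M" and X: "X \<subseteq> gnd M" and d: "A \<inter> X = {}"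
  and fX: "finite X" and r: "rank M (A \<union> X) < rank M A + card X"
  shows "\<exists>C. circuit M C \<and> C \<subseteq> A \<union> X \<and> C \<inter> X \<noteq> {}"
proof -
  obtain I where I: "I \<subseteq> A" "I \<in> indeps M" "card I = rank M A" using rank_obtain[OF w] by blast
  have n: "I \<union> X \<notin> indeps M"
  proof
    assume i: "I \<union> X \<in> indeps M"
    have "card (I \<union> X) = card I + card X" by (rule card_Un_disjoint) (use indep_fin[OF w I(2)] fX I(1) d in auto)
    moreover have "card (I \<union> X) \<le> rank M (A \<union> X)" by (rule rank_ge[OF w _ i]) (use I(1) in blast)
    ultimately show False using r I(3) by linarith
  qed
  have "I \<union> X \<subseteq> gnd M" using I(1) A X by blast
  then obtain C where C: "C \<subseteq> I \<union> X" "circuit M C" using dep_has_circuit[OF w _ n] by blast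
  have "C \<inter> X \<noteq> {}"
  proof
    assume "C \<inter> X = {}"
    then have "C \<subseteq> I" using C(1) by blast
    then have "C \<in> indeps M" by (rule wfD(4)[OF w I(2)])
    then show False using circuit_props(2)[OF w C(2)] by blast
  qed
  then show ?thesis using C I(1) by blast
qed

lemma dep_over_conv: assumes w: "wf_matroid M" and d: "A \<inter> X = {}" and fX: "finite X"
  and c: "circuit M C" and CS: "C \<subseteq> A \<union> X" and y: "y \<in> C" "y \<in> X"
  shows "rank M (A \<union> X) < rank M A + card X"
proof -
  have "rank M (insert y (A \<union> (X - {y}))) = rank M (A \<union> (X - {y}))"
    by (rule circuit_cl[OF w c y(1)]) (use CS in blast)
  moreover have "insert y (A \<union> (X - {y})) = A \<union> X" using y by blast
  moreover have "rank M (A \<union> (X - {y})) \<le> rank M A + card (X - {y})" by (rule rank_union_card[OF w]) (use fX in simp)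
  moreover have "card (X - {y}) + 1 = card X"
  proof -
    have "card (X - {y}) = card X - 1" using y fX by simp
    moreover have "card X > 0" using y fX card_gt_0_iff by blast
    ultimately show ?thesis by linarith
  qed
  ultimately have "rank M (A \<union> X) = rank M (A \<union> (X - {y}))" "rank M (A \<union> (X - {y})) \<le> rank M A + card (X - {y})"
    "card (X - {y}) + 1 = card X" by simp_all
  then show ?thesis by linarith
qed

lemma min_conn: assumes w: "wf_matroid M" and conn: "connected_matroid M"
  and c1: "circuit M C1" and c2: "circuit M C2" and disj: "C1 \<inter> C2 = {}"
  shows "\<exists>D. circuit M D \<and> D \<inter> C1 \<noteq> {} \<and> D \<inter> C2 \<noteq> {} \<and>
    (\<forall>D'. circuit M D' \<longrightarrow> D' \<inter> C1 \<noteq> {} \<longrightarrow> D' \<inter> C2 \<noteq> {} \<longrightarrow> card (D - (C1 \<union> C2)) \<le> card (D' - (C1 \<union> C2)))"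
proof -
  obtain a where a: "a \<in> C1" using circuit_props(4)[OF w c1] by blast
  obtain b where b: "b \<in> C2" using circuit_props(4)[OF w c2] by blast
  have "a \<noteq> b" using a b disj by blast
  moreover have "a \<in> gnd M" "b \<in> gnd M" using a b circuit_props(1)[OF w c1] circuit_props(1)[OF w c2] by blast+
  ultimately obtain D0 where D0: "circuit M D0" "a \<in> D0" "b \<in> D0" using conn unfolding connected_matroid_def by blast
  define Cn where "Cn D \<longleftrightarrow> circuit M D \<and> D \<inter> C1 \<noteq> {} \<and> D \<inter> C2 \<noteq> {}" for D
  define m where "m D = card (D - (C1 \<union> C2))" for D
  have "Cn D0" unfolding Cn_def using D0 a b by blast
  then obtain D where D: "Cn D" and mn: "\<And>D'. Cn D' \<Longrightarrow> m D \<le> m D'"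
    using ex_has_least_nat[of Cn D0 m] by blast
  show ?thesis using D mn unfolding Cn_def m_def by blast
qed

lemma indep_over: assumes w: "wf_matroid M" and c1: "circuit M C1" and c2: "circuit M C2" and disj: "C1 \<inter> C2 = {}"
  and cD: "circuit M D" and D2: "D \<inter> C2 \<noteq> {}"
  and mn: "\<And>D'. circuit M D' \<Longrightarrow> D' \<inter> C1 \<noteq> {} \<Longrightarrow> D' \<inter> C2 \<noteq> {} \<Longrightarrow> card (D - (C1 \<union> C2)) \<le> card (D' - (C1 \<union> C2))"
  shows "rank M (C1 \<union> (D - (C1 \<union> C2))) = rank M C1 + card (D - (C1 \<union> C2))"
proof -
  define P where "P = D - (C1 \<union> C2)"
  have fP: "finite P" unfolding P_def using circuit_props(3)[OF w cD] by simp
  have le: "rank M (C1 \<union> P) \<le> rank M C1 + card P" by (rule rank_union_card[OF w fP])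
  have "\<not> rank M (C1 \<union> P) < rank M C1 + card P"
  proof
    assume lt: "rank M (C1 \<union> P) < rank M C1 + card P"
    have C1E: "C1 \<subseteq> gnd M" using circuit_props(1)[OF w c1] .
    have PE: "P \<subseteq> gnd M" unfolding P_def using circuit_props(1)[OF w cD] by blast
    have dj: "C1 \<inter> P = {}" unfolding P_def by blast
    obtain C'' where C'': "circuit M C''" "C'' \<subseteq> C1 \<union> P" "C'' \<inter> P \<noteq> {}" using dep_over[OF w C1E PE dj fP lt] by blast
    obtain dd where dd: "dd \<in> C''" "dd \<in> P" using C''(3) by blast
    obtain b1 where b1: "b1 \<in> D" "b1 \<in> C2" using D2 by blast
    have b1n: "b1 \<notin> C''" using C''(2) b1(2) disj unfolding P_def by blast
    have ddD: "dd \<in> D \<inter> C''" using dd unfolding P_def by blast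
    obtain C3 where C3: "circuit M C3" "b1 \<in> C3" "C3 \<subseteq> (D \<union> C'') - {dd}"
      using strong_elim[OF w cD C''(1) ddD, of b1] b1 b1n by blast
    show False
    proof (cases "C3 \<inter> C1 = {}")
      case False
      have "card P \<le> card (C3 - (C1 \<union> C2))" using mn[OF C3(1) False] b1 C3(2) unfolding P_def by blast
      moreover have "C3 - (C1 \<union> C2) \<subseteq> P - {dd}" using C3(3) C''(2) unfolding P_def by blast
      then have "card (C3 - (C1 \<union> C2)) \<le> card (P - {dd})" using fP by (simp add: card_mono)
      moreover have "card (P - {dd}) < card P" by (rule card_Diff1_less[OF fP dd(2)])
      ultimately show False by linarith
    next
      case True
      have "C3 \<subseteq> D" using C3(3) C''(2) True unfolding P_def by blast
      then have "C3 = D" by (rule circuit_subset_eq[OF C3(1) cD])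
      then show False using C3(3) ddD by blast
    qed
  qed
  then show ?thesis using le unfolding P_def by linarith
qed

lemma indep_over2: assumes w: "wf_matroid M" and c1: "circuit M C1" and c2: "circuit M C2" and disj: "C1 \<inter> C2 = {}"
  and cD: "circuit M D"
  and mn: "\<And>D'. circuit M D' \<Longrightarrow> D' \<inter> C1 \<noteq> {} \<Longrightarrow> D' \<inter> C2 \<noteq> {} \<Longrightarrow> card (D - (C1 \<union> C2)) \<le> card (D' - (C1 \<union> C2))"
  and h1: "rank M (C1 \<union> (D - (C1 \<union> C2))) = rank M C1 + card (D - (C1 \<union> C2))"
  and h2: "rank M (C2 \<union> (D - (C1 \<union> C2))) = rank M C2 + card (D - (C1 \<union> C2))"
  and x: "x \<in> D - (C1 \<union> C2)"
  shows "rank M ((C1 \<union> C2) \<union> ((D - (C1 \<union> C2)) - {x})) = rank M (C1 \<union> C2) + card ((D - (C1 \<union> C2)) - {x})"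
proof -
  define P where "P = D - (C1 \<union> C2)"
  have fP: "finite P" unfolding P_def using circuit_props(3)[OF w cD] by simp
  have fPx: "finite (P - {x})" using fP by simp
  have le: "rank M ((C1 \<union> C2) \<union> (P - {x})) \<le> rank M (C1 \<union> C2) + card (P - {x})" by (rule rank_union_card[OF w fPx])
  have "\<not> rank M ((C1 \<union> C2) \<union> (P - {x})) < rank M (C1 \<union> C2) + card (P - {x})"
  proof
    assume lt: "rank M ((C1 \<union> C2) \<union> (P - {x})) < rank M (C1 \<union> C2) + card (P - {x})"
    have CE: "C1 \<union> C2 \<subseteq> gnd M" using circuit_props(1)[OF w c1] circuit_props(1)[OF w c2] by blast
    have PE: "P - {x} \<subseteq> gnd M" unfolding P_def using circuit_props(1)[OF w cD] by blast
    have dj: "(C1 \<union> C2) \<inter> (P - {x}) = {}" unfolding P_def by blast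
    obtain C where C: "circuit M C" "C \<subseteq> (C1 \<union> C2) \<union> (P - {x})" "C \<inter> (P - {x}) \<noteq> {}"
      using dep_over[OF w CE PE dj fPx lt] by blast
    obtain y where y: "y \<in> C" "y \<in> P" using C(3) by blast
    show False
    proof (cases "C \<inter> C1 \<noteq> {} \<and> C \<inter> C2 \<noteq> {}")
      case True
      have "card P \<le> card (C - (C1 \<union> C2))" using mn[OF C(1)] True unfolding P_def by blast
      moreover have "C - (C1 \<union> C2) \<subseteq> P - {x}" using C(2) by blast
      then have "card (C - (C1 \<union> C2)) \<le> card (P - {x})" using fPx by (simp add: card_mono)
      moreover have "card (P - {x}) < card P" by (rule card_Diff1_less[OF fP]) (use x in \<open>simp add: P_def\<close>)
      ultimately show False by linarith
    next
      case False
      show False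
      proof (cases "C \<inter> C1 = {}")
        case n1: True
        have sb: "C \<subseteq> C2 \<union> P" using C(2) n1 by blast
        have dj2: "C2 \<inter> P = {}" unfolding P_def by blast
        have "rank M (C2 \<union> P) < rank M C2 + card P" by (rule dep_over_conv[OF w dj2 fP C(1) sb y])
        then show False using h2 unfolding P_def by simp
      next
        case n1': False
        then have n2: "C \<inter> C2 = {}" using False by blast
        have sb: "C \<subseteq> C1 \<union> P" using C(2) n2 by blast
        have dj1: "C1 \<inter> P = {}" unfolding P_def by blast
        have "rank M (C1 \<union> P) < rank M C1 + card P" by (rule dep_over_conv[OF w dj1 fP C(1) sb y])
        then show False using h1 unfolding P_def by simp
      qed
    qed
  qed
  then show ?thesis using le unfolding P_def by linarith
qed

lemma skew_Inv: assumes w: "wf_matroid M" and conn: "connected_matroid M" and hs: "has_skew_circuits M"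
  shows "\<exists>Z C1 C2 P. Z \<subseteq> gnd M \<and> Inv (restr M Z) C1 C2 P"
proof -
  obtain C1 C2 where c1: "circuit M C1" and c2: "circuit M C2" and ne: "C1 \<noteq> C2" and sk: "skew M C1 C2"
    using hs unfolding has_skew_circuits_def by blast
  have disj: "C1 \<inter> C2 = {}" by (rule skew_disjoint[OF w c1 c2 ne sk])
  have disj': "C2 \<inter> C1 = {}" using disj by blast
  have sk': "rank M C1 + rank M C2 = rank M (C1 \<union> C2)" using sk unfolding skew_def .
  obtain D where cD: "circuit M D" and D1: "D \<inter> C1 \<noteq> {}" and D2: "D \<inter> C2 \<noteq> {}"
    and mn0: "\<forall>D'. circuit M D' \<longrightarrow> D' \<inter> C1 \<noteq> {} \<longrightarrow> D' \<inter> C2 \<noteq> {} \<longrightarrow> card (D - (C1 \<union> C2)) \<le> card (D' - (C1 \<union> C2))"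
    using min_conn[OF w conn c1 c2 disj] by blast
  have mn: "\<And>D'. circuit M D' \<Longrightarrow> D' \<inter> C1 \<noteq> {} \<Longrightarrow> D' \<inter> C2 \<noteq> {} \<Longrightarrow> card (D - (C1 \<union> C2)) \<le> card (D' - (C1 \<union> C2))"
    using mn0 by blast
  have u: "C2 \<union> C1 = C1 \<union> C2" by blast
  have mn': "\<And>D'. circuit M D' \<Longrightarrow> D' \<inter> C2 \<noteq> {} \<Longrightarrow> D' \<inter> C1 \<noteq> {} \<Longrightarrow> card (D - (C2 \<union> C1)) \<le> card (D' - (C2 \<union> C1))"
    using mn unfolding u by blast
  define P where "P = D - (C1 \<union> C2)"
  have h1: "rank M (C1 \<union> P) = rank M C1 + card P" unfolding P_def by (rule indep_over[OF w c1 c2 disj cD D2 mn])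
  have h2: "rank M (C2 \<union> P) = rank M C2 + card P" using indep_over[OF w c2 c1 disj' cD D1 mn'] unfolding u P_def .
  have h3: "rank M ((C1 \<union> C2) \<union> (P - {x})) = rank M (C1 \<union> C2) + card (P - {x})" if x: "x \<in> P" for x
    using indep_over2[OF w c1 c2 disj cD mn h1[unfolded P_def] h2[unfolded P_def] x[unfolded P_def]] unfolding P_def .
  have nc: "D' \<subseteq> C1 \<or> D' \<subseteq> C2" if "circuit M D'" "D' \<subseteq> C1 \<union> C2" for D'
    using no_cross[OF w disj sk' that] .
  have Pne: "P \<noteq> {}"
  proof
    assume "P = {}"
    then have "D \<subseteq> C1 \<union> C2" unfolding P_def by blast
    then have "D \<subseteq> C1 \<or> D \<subseteq> C2" using nc[OF cD] by blast
    then show False using D1 D2 disj by blast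
  qed
  obtain p where p: "p \<in> P" using Pne by blast
  define Z where "Z = C1 \<union> C2 \<union> P"
  have C1E: "C1 \<subseteq> gnd M" and C2E: "C2 \<subseteq> gnd M" using circuit_props(1)[OF w c1] circuit_props(1)[OF w c2] by auto
  have ZE: "Z \<subseteq> gnd M" unfolding Z_def P_def using C1E C2E circuit_props(1)[OF w cD] by blast
  have fC1: "finite C1" and fC2: "finite C2" using circuit_props(3)[OF w c1] circuit_props(3)[OF w c2] by auto
  have fP: "finite P" unfolding P_def using circuit_props(3)[OF w cD] by simp
  have r1: "rank M C1 + 1 = card C1"
  proof -
    have "card C1 > 0" using fC1 circuit_props(4)[OF w c1] card_gt_0_iff by blast
    then show ?thesis using circuit_props(6)[OF w c1] by linarith
  qed
  have r2: "rank M C2 + 1 = card C2"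
  proof -
    have "card C2 > 0" using fC2 circuit_props(4)[OF w c2] card_gt_0_iff by blast
    then show ?thesis using circuit_props(6)[OF w c2] by linarith
  qed
  have cPx: "card (P - {x}) + 1 = card P" if "x \<in> P" for x
  proof -
    have "card (P - {x}) = card P - 1" using that fP by simp
    moreover have "card P > 0" using that fP card_gt_0_iff by blast
    ultimately show ?thesis by linarith
  qed
  have dPZ: "(C1 \<union> C2) \<union> (P - {x}) = Z - {x}" if "x \<in> P" for x
    using that unfolding Z_def P_def by blast
  have rZ: "rank M Z = rank M (C1 \<union> C2) + card (P - {p})"
  proof -
    have "rank M (insert p ((C1 \<union> C2) \<union> (P - {p}))) = rank M ((C1 \<union> C2) \<union> (P - {p}))"
      by (rule circuit_cl[OF w cD]) (use p in \<open>auto simp: P_def\<close>)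
    moreover have "insert p ((C1 \<union> C2) \<union> (P - {p})) = Z" using p unfolding Z_def by blast
    ultimately show ?thesis using h3[OF p] by simp
  qed
  have cZ: "card Z = card C1 + card C2 + card P"
  proof -
    have "card (C1 \<union> C2) = card C1 + card C2" by (rule card_Un_disjoint[OF fC1 fC2 disj])
    moreover have "card ((C1 \<union> C2) \<union> P) = card (C1 \<union> C2) + card P"
      by (rule card_Un_disjoint) (use fC1 fC2 fP in \<open>auto simp: P_def\<close>)
    ultimately show ?thesis unfolding Z_def by simp
  qed
  let ?N = "restr M Z"
  have rr: "rank ?N X = rank M X" if "X \<subseteq> Z" for X using rank_restr[OF that] .
  have Inv: "Inv ?N C1 C2 P" unfolding Inv_def
  proof (intro conjI)
    show "wf_matroid ?N" by (rule wf_restr[OF w ZE])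
    show "gnd ?N = C1 \<union> C2 \<union> P" unfolding Z_def by simp
    show "C1 \<inter> C2 = {}" "C1 \<inter> P = {}" "C2 \<inter> P = {}" using disj unfolding P_def by blast+
    show "circuit ?N C1" using circuit_restr_iff[OF w ZE, of C1] c1 unfolding Z_def by blast
    show "circuit ?N C2" using circuit_restr_iff[OF w ZE, of C2] c2 unfolding Z_def by blast
    show "P \<noteq> {}" by (rule Pne)
    show "rank ?N (gnd ?N) + 3 = card (gnd ?N)" using rr[of Z] rZ cZ sk' r1 r2 cPx[OF p] by simp
    show "rank ?N (C1 \<union> C2) + 2 = card C1 + card C2" using rr[of "C1 \<union> C2"] sk' r1 r2 unfolding Z_def by simp
    have eZ: "rank ?N (gnd ?N) = rank M Z" using rr[of Z] by simp
    have s2: "C2 \<union> P \<subseteq> Z" and s1: "C1 \<union> P \<subseteq> Z" unfolding Z_def by blast+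
    show "rank ?N (C2 \<union> P) + card C1 = rank ?N (gnd ?N) + 2"
      using rr[OF s2] eZ h2 rZ sk' r1 r2 cPx[OF p] by linarith
    show "rank ?N (C1 \<union> P) + card C2 = rank ?N (gnd ?N) + 2"
      using rr[OF s1] eZ h1 rZ sk' r1 r2 cPx[OF p] by linarith
    show "\<forall>x\<in>gnd ?N. rank ?N (gnd ?N - {x}) = rank ?N (gnd ?N)"
    proof
      fix x assume "x \<in> gnd ?N"
      then have x: "x \<in> Z" by simp
      have "rank M (Z - {x}) = rank M Z"
      proof (cases "x \<in> P")
        case True
        have "rank M (Z - {x}) = rank M (C1 \<union> C2) + card (P - {x})" using h3[OF True] dPZ[OF True] by simp
        then show ?thesis using rZ cPx[OF True] cPx[OF p] by simp
      next
        case False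
        then have "x \<in> C1 \<or> x \<in> C2" using x unfolding Z_def by blast
        then have "rank M (insert x (Z - {x})) = rank M (Z - {x})"
        proof
          assume xc: "x \<in> C1"
          show ?thesis by (rule circuit_cl[OF w c1 xc]) (unfold Z_def, blast)
        next
          assume xc: "x \<in> C2"
          show ?thesis by (rule circuit_cl[OF w c2 xc]) (unfold Z_def, blast)
        qed
        moreover have "insert x (Z - {x}) = Z" using x by blast
        ultimately show ?thesis by simp
      qed
      moreover have "Z - {x} \<subseteq> Z" by blast
      ultimately show "rank ?N (gnd ?N - {x}) = rank ?N (gnd ?N)" using rr[of "Z - {x}"] rr[of Z] by simp
    qed
  qed
  then show ?thesis using ZE by blast
qed

theorem theorem1p1:
  fixes M :: "'a matroid"
  assumes "wf_matroid M" and "connected_matroid M"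
  shows "(SSCE M \<longleftrightarrow> \<not> has_skew_circuits M)
       \<and> (\<not> has_skew_circuits M \<longleftrightarrow>
            (\<forall>k l :: nat. 3 \<le> k \<longrightarrow> 3 \<le> l \<longrightarrow> \<not> (\<exists>N. series_minor N M \<and> iso N (SU k l))))
       \<and> ((\<forall>k l :: nat. 3 \<le> k \<longrightarrow> 3 \<le> l \<longrightarrow> \<not> (\<exists>N. series_minor N M \<and> iso N (SU k l)))
            \<longleftrightarrow> unbreakable (dual M))"
proof -
  have w: "wf_matroid M" and conn: "connected_matroid M" using assms by auto
  have A: "SSCE M \<longleftrightarrow> \<not> has_skew_circuits M"
    using noskew_SSCE[OF w] SSCE_noskew[OF w conn] by blast
  have B: "\<not> has_skew_circuits M \<longleftrightarrow>
            (\<forall>k l :: nat. 3 \<le> k \<longrightarrow> 3 \<le> l \<longrightarrow> \<not> (\<exists>N. series_minor N M \<and> iso N (SU k l)))"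
  proof
    assume ns: "\<not> has_skew_circuits M"
    show "\<forall>k l :: nat. 3 \<le> k \<longrightarrow> 3 \<le> l \<longrightarrow> \<not> (\<exists>N. series_minor N M \<and> iso N (SU k l))"
    proof (intro allI impI notI)
      fix k l :: nat assume k: "3 \<le> k" and l: "3 \<le> l" and ex: "\<exists>N. series_minor N M \<and> iso N (SU k l)"
      then obtain N where sm: "series_minor N M" and iso: "iso N (SU k l)" by blast
      have "wf_matroid N \<and> \<not> has_skew_circuits N" by (rule sm_inv[OF sm w ns])
      then show False using SU_skew[OF _ iso k l] by blast
    qed
  next
    assume h: "\<forall>k l :: nat. 3 \<le> k \<longrightarrow> 3 \<le> l \<longrightarrow> \<not> (\<exists>N. series_minor N M \<and> iso N (SU k l))"
    show "\<not> has_skew_circuits M"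
    proof
      assume hs: "has_skew_circuits M"
      obtain Z C1 C2 P where ZE: "Z \<subseteq> gnd M" and I: "Inv (restr M Z) C1 C2 P" using skew_Inv[OF w conn hs] by blast
      obtain N' k l where N': "3 \<le> k" "3 \<le> l" "series_minor N' (restr M Z)" "iso N' (SU k l)"
        using Inv_minor[OF I] by blast
      have "series_minor N' M" using series_minor_trans[OF N'(3) series_minor_restr[OF w ZE]] .
      then show False using h N' by blast
    qed
  qed
  have C: "\<not> has_skew_circuits M \<longleftrightarrow> unbreakable (dual M)"
    using noskew_iff[OF w] unbreak_iff[OF w conn] by simp
  show ?thesis using A B C by blast
qed



end
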